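(* In the asymmetric regime $\lambda_+>\lambda_-$, let $t_G<t\le\infty$. Then $g_-:=g(-1)>0$, and for every $0<r<\infty$ there exists a finite $A=A(\lambda_+,\lambda_-,r)$ such that for every ball $B=B_r(x)$, every bounded measurable $\Lambda\supset B$, every $\hat{\boldsymbol\omega}$ and every $f\in\mathcal F^b_B$, $$\sup_{\boldsymbol\omega^1,\boldsymbol\omega^2}\big|\gamma^\infty_B(f\mid\hat{\boldsymbol\omega}_{\Lambda\setminus B}\boldsymbol\omega^1_{\Lambda^c})-\gamma^\infty_B(f\mid\hat{\boldsymbol\omega}_{\Lambda\setminus B}\boldsymbol\omega^2_{\Lambda^c})\big|\le A\|f\|e^{-g_-d(B,\Lambda^c)/(2a)},$$ where $\gamma^\infty$ is defined with time parameter $t$ and $d(B,\Lambda^c)=\inf_{y\in B,z\in\Lambda^c}|y-z|$.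
   Context: Fix $d\ge2$, $a>0$, $\lambda_+>\lambda_->0$, $\alpha=\lambda_+/\lambda_-$, $t_G=\frac12\log\frac{\lambda_++\lambda_-}{\lambda_+-\lambda_-}$. Colored configurations $\hat{\boldsymbol\omega}$ are pairs of disjoint locally finite subsets of $\mathbb R^d$ (colors $\hat\sigma_x\in\{+,-\}$, grey configuration $\omega$); $\mathcal F^b_B$ are bounded measurable functions of the colored configuration in $B$; $\|f\|$ sup norm. $p_t(+,+)=p_t(-,-)=\frac12(1+e^{-2t})$, $p_t(+,-)=p_t(-,+)=\frac12(1-e^{-2t})$ ($\equiv\frac12$ at $t=\infty$). Magnetization $m(\hat{\boldsymbol\omega}_D)=|\omega_D|^{-1}\sum_{x\in\omega_D}\hat\sigma_x$; $g(m)=\log\alpha+m\log\frac{1+e^{-2t}}{1-e^{-2t}}$ (second term $0$ for $t=\infty$); $\rho(\hat{\boldsymbol\omega}_D)=\exp(-|\omega_D|g(m(\hat{\boldsymbol\omega}_D)))$. Points at distance $<2a$ are connected; clusters are connected components. For bounded $\Lambda$, grey $\omega_\Lambda$ and boundary $\hat{\boldsymbol\omega}_{\Lambda^c}$: $\mathcal C_\Lambda(\omega_\Lambda)$ = clusters of $\omega_\Lambda\cup\omega_{\Lambda^c}$ not contained in $\bar\Lambda^c$ ($\bar\Lambda$ the $2a$-neighbourhood of $\Lambda$), $\mathcal C^\infty_\Lambda,\mathcal C^f_\Lambda$ its infinite/finite members; $|\hat\sigma_D|^\pm$ counts $\pm$ colors. $P^-_\Lambda$: Poisson process of grey points in $\Lambda$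 of intensity $\lambda_-$. $\gamma^\infty_\Lambda(f\mid\hat{\boldsymbol\omega}_{\Lambda^c})=\frac{\int P^-_\Lambda(d\omega_\Lambda)f^\infty(\omega_\Lambda)W(\omega_\Lambda)}{\int P^-_\Lambda(d\omega_\Lambda)W(\omega_\Lambda)}$ with $W=\prod_{C\in\mathcal C^f_\Lambda}(\alpha^{|C\cap\Lambda|}+\rho(\hat{\boldsymbol\omega}_{C\setminus\Lambda}))\prod_{C\in\mathcal C^\infty_\Lambda}\alpha^{|C\cap\Lambda|}$, $f^\infty(\omega_\Lambda)=\sum_{\hat\sigma}f(\omega_\Lambda,\hat\sigma)\nu^\infty_\Lambda(\hat\sigma)$ and $\nu^\infty_\Lambda(\hat\sigma)=\prod_{C\in\mathcal C^\infty_\Lambda}p_t(+,+)^{|\hat\sigma_{C\cap\Lambda}|^+}p_t(+,-)^{|\hat\sigma_{C\cap\Lambda}|^-}\prod_{C\in\mathcal C^f_\Lambda}\frac{\alpha^{|C\cap\Lambda|}p_t(+,+)^{|\hat\sigma_{C\cap\Lambda}|^+}p_t(+,-)^{|\hat\sigma_{C\cap\Lambda}|^-}+p_t(-,+)^{|\hat\sigma_{C\cap\Lambda}|^+}p_t(-,-)^{|\hat\sigma_{C\cap\Lambda}|^-}\rho(\hat{\boldsymbol\omega}_{C\setminus\Lambda})}{\alpha^{|C\cap\Lambda|}+\rho(\hat{\boldsymbol\omega}_{C\setminus\Lambda})}$. *)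

theory Defs
  imports "HOL-Analysis.Analysis" "HOL-Library.Extended_Real"
begin


type_synonym 'd pt = "real^'d"
text \<open>Colored configuration: (set of plus-points, set of minus-points).\<close>
type_synonym 'd ccfg = "'d pt set \<times> 'd pt set"

definition grey :: "('d::finite) ccfg \<Rightarrow> ('d::finite) pt set" where
  "grey w = fst w \<union> snd w"

definition restr :: "('d::finite) ccfg \<Rightarrow> ('d::finite) pt set \<Rightarrow> ('d::finite) ccfg" where
  "restr w D = (fst w \<inter> D, snd w \<inter> D)"

definition cat :: "('d::finite) ccfg \<Rightarrow> ('d::finite) ccfg \<Rightarrow> ('d::finite) ccfg" where
  "cat w1 w2 = (fst w1 \<union> fst w2, snd w1 \<union> snd w2)"

definition locfin :: "('d::finite) pt set \<Rightarrow> bool" where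
  "locfin S \<longleftrightarrow> (\<forall>K. bounded K \<longrightarrow> finite (S \<inter> K))"

definition ccfgs :: "('d::finite) ccfg set" where
  "ccfgs = {w. fst w \<inter> snd w = {} \<and> locfin (grey w)}"

definition qexp :: "ereal \<Rightarrow> real" where
  "qexp t = (if t = \<infinity> then 0 else exp (-2 * real_of_ereal t))"

text \<open>Transition probabilities p_t(s,s'); True encodes +, False encodes -.\<close>
definition ptr :: "ereal \<Rightarrow> bool \<Rightarrow> bool \<Rightarrow> real" where
  "ptr t s s' = (if t = \<infinity> then 1/2
                 else if s = s' then (1 + qexp t) / 2 else (1 - qexp t) / 2)"

definition tG :: "real \<Rightarrow> real \<Rightarrow> real" where
  "tG lp lm = 1/2 * ln ((lp + lm) / (lp - lm))"

definition gfun :: "real \<Rightarrow> real \<Rightarrow> ereal \<Rightarrow> real \<Rightarrow> real" where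
  "gfun lp lm t m = ln (lp / lm) +
     (if t = \<infinity> then 0 else m * ln ((1 + qexp t) / (1 - qexp t)))"

definition magn :: "('d::finite) ccfg \<Rightarrow> real" where
  "magn w = (\<Sum>x\<in>grey w. if x \<in> fst w then 1 else -1) / real (card (grey w))"

definition rho :: "real \<Rightarrow> real \<Rightarrow> ereal \<Rightarrow> ('d::finite) ccfg \<Rightarrow> real" where
  "rho lp lm t w = exp (- real (card (grey w)) * gfun lp lm t (magn w))"

definition linked :: "real \<Rightarrow> ('d::finite) pt set \<Rightarrow> (('d::finite) pt \<times> ('d::finite) pt) set" where
  "linked a \<omega> = {(x, y). x \<in> \<omega> \<and> y \<in> \<omega> \<and> dist x y < 2 * a}"

definition cluster :: "real \<Rightarrow> ('d::finite) pt set \<Rightarrow> ('d::finite) pt \<Rightarrow> ('d::finite) pt set" where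
  "cluster a \<omega> x = {y. (x, y) \<in> (linked a \<omega>)\<^sup>*}"

definition clusters :: "real \<Rightarrow> ('d::finite) pt set \<Rightarrow> ('d::finite) pt set set" where
  "clusters a \<omega> = {cluster a \<omega> x | x. x \<in> \<omega>}"

definition nbhd :: "real \<Rightarrow> ('d::finite) pt set \<Rightarrow> ('d::finite) pt set" where
  "nbhd a L = {x. \<exists>y\<in>L. dist x y < 2 * a}"

text \<open>C_Lambda(omega_Lambda) for boundary condition eta (only eta outside Lambda is used).\<close>
definition CL :: "real \<Rightarrow> ('d::finite) pt set \<Rightarrow> ('d::finite) ccfg \<Rightarrow> ('d::finite) pt set \<Rightarrow> ('d::finite) pt set set" where
  "CL a L eta \<omega>L = {C \<in> clusters a (\<omega>L \<union> grey (restr eta (- L))). \<not> C \<subseteq> - nbhd a L}"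

definition Wt :: "real \<Rightarrow> real \<Rightarrow> real \<Rightarrow> ereal \<Rightarrow> ('d::finite) pt set \<Rightarrow> ('d::finite) ccfg \<Rightarrow> ('d::finite) pt set \<Rightarrow> real" where
  "Wt a lp lm t L eta \<omega>L =
     (\<Prod>C\<in>{C \<in> CL a L eta \<omega>L. finite C}.
         (lp / lm) ^ card (C \<inter> L) + rho lp lm t (restr eta (C - L))) *
     (\<Prod>C\<in>{C \<in> CL a L eta \<omega>L. infinite C}. (lp / lm) ^ card (C \<inter> L))"

text \<open>nu^infinity_Lambda of the coloring of omega_Lambda whose plus-points form the set S.\<close>
definition nuinf :: "real \<Rightarrow> real \<Rightarrow> real \<Rightarrow> ereal \<Rightarrow> ('d::finite) pt set \<Rightarrow> ('d::finite) ccfg \<Rightarrow> ('d::finite) pt set \<Rightarrow> ('d::finite) pt set \<Rightarrow> real" where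
  "nuinf a lp lm t L eta \<omega>L S =
     (\<Prod>C\<in>{C \<in> CL a L eta \<omega>L. infinite C}.
         ptr t True True ^ card (S \<inter> (C \<inter> L)) * ptr t True False ^ card ((C \<inter> L) - S)) *
     (\<Prod>C\<in>{C \<in> CL a L eta \<omega>L. finite C}.
         ((lp / lm) ^ card (C \<inter> L) * ptr t True True ^ card (S \<inter> (C \<inter> L))
             * ptr t True False ^ card ((C \<inter> L) - S)
          + ptr t False True ^ card (S \<inter> (C \<inter> L)) * ptr t False False ^ card ((C \<inter> L) - S)
             * rho lp lm t (restr eta (C - L)))
         / ((lp / lm) ^ card (C \<inter> L) + rho lp lm t (restr eta (C - L))))"

definition finf :: "real \<Rightarrow> real \<Rightarrow> real \<Rightarrow> ereal \<Rightarrow> ('d::finite) pt set \<Rightarrow> ('d::finite) ccfg \<Rightarrow> (('d::finite) ccfg \<Rightarrow> real) \<Rightarrow> ('d::finite) pt set \<Rightarrow> real" where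
  "finf a lp lm t L eta f \<omega>L = (\<Sum>S\<in>Pow \<omega>L. f (S, \<omega>L - S) * nuinf a lp lm t L eta \<omega>L S)"

text \<open>Integral against the Poisson point process of intensity lam in the bounded set L,
  written out via its standard density representation.\<close>
definition poisson_int :: "real \<Rightarrow> ('d::finite) pt set \<Rightarrow> (('d::finite) pt set \<Rightarrow> real) \<Rightarrow> real" where
  "poisson_int lam L F =
     (\<Sum>n. exp (- lam * measure lebesgue L) * lam ^ n / fact n *
        (\<integral>x. F (x ` {..<n}) \<partial>(Pi\<^sub>M {..<n} (\<lambda>_. lebesgue_on L))))"

definition gamma_inf :: "real \<Rightarrow> real \<Rightarrow> real \<Rightarrow> ereal \<Rightarrow> ('d::finite) pt set \<Rightarrow> (('d::finite) ccfg \<Rightarrow> real) \<Rightarrow> ('d::finite) ccfg \<Rightarrow> real" where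
  "gamma_inf a lp lm t L f eta =
     poisson_int lm L (\<lambda>\<omega>L. finf a lp lm t L eta f \<omega>L * Wt a lp lm t L eta \<omega>L)
     / poisson_int lm L (\<lambda>\<omega>L. Wt a lp lm t L eta \<omega>L)"

definition cfg_measurable :: "(('d::finite) ccfg \<Rightarrow> real) \<Rightarrow> bool" where
  "cfg_measurable f \<longleftrightarrow> (\<forall>n (s :: nat \<Rightarrow> bool).
     (\<lambda>x. f (x ` {i \<in> {..<n}. s i}, x ` {i \<in> {..<n}. \<not> s i}))
       \<in> borel_measurable (Pi\<^sub>M {..<n} (\<lambda>_. (lborel :: ('d::finite) pt measure))))"

definition Fb :: "('d::finite) pt set \<Rightarrow> (('d::finite) ccfg \<Rightarrow> real) set" where
  "Fb B = {f. (\<forall>w. f w = f (restr w B)) \<and> bounded (f ` ccfgs) \<and> cfg_measurable f}"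

definition supnorm :: "(('d::finite) ccfg \<Rightarrow> real) \<Rightarrow> real" where
  "supnorm f = (SUP w\<in>(ccfgs :: ('d::finite) ccfg set). \<bar>f w\<bar>)"

end

theory Submission
  imports Defs
begin


locale setup0 =
  fixes a lp lm :: real and t :: ereal
  assumes a_pos: "a > 0" and lpm: "lp > lm" and lm_pos: "lm > 0"
    and tG_lt: "ereal (tG lp lm) < t"
begin

definition "al = lp / lm"
definition "gm = gfun lp lm t (-1)"

lemma al_gt1: "al > 1" using lpm lm_pos by (simp add: al_def)

lemma t_fin_q: "t \<noteq> \<infinity> \<Longrightarrow> qexp t < (lp - lm) / (lp + lm) \<and> qexp t \<ge> 0"
proof -
  assume ti: "t \<noteq> \<infinity>"
  obtain u where s: "t = ereal u" using ti tG_lt by (cases t) auto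
  have "tG lp lm < u" using tG_lt s by simp
  then have "exp ((-2) * u) < exp ((-2) * tG lp lm)" by simp
  also have "exp ((-2) * tG lp lm) = (lp - lm) / (lp + lm)"
  proof -
    have pos: "(lp + lm) / (lp - lm) > 0" using lpm lm_pos by simp
    have "(-2) * tG lp lm = ln (inverse ((lp + lm) / (lp - lm)))"
      unfolding tG_def using lpm lm_pos by (simp add: ln_div)
    then show ?thesis using lpm lm_pos by simp
  qed
  finally show ?thesis using s ti by (simp add: qexp_def)
qed

lemma q_range: "0 \<le> qexp t" "qexp t < 1"
proof -
  show "0 \<le> qexp t" by (simp add: qexp_def)
  have "(lp - lm) / (lp + lm) < 1" using lpm lm_pos by simp
  then show "qexp t < 1" using t_fin_q by (cases "t = \<infinity>") (auto simp: qexp_def[of \<infinity>])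
qed

lemma ratio_lt_al: "t \<noteq> \<infinity> \<Longrightarrow> (1 + qexp t) / (1 - qexp t) < al"
proof -
  assume ti: "t \<noteq> \<infinity>"
  define q where "q = qexp t"
  have q: "q < (lp - lm) / (lp + lm)" "0 \<le> q" "q < 1" using t_fin_q[OF ti] q_range by (auto simp: q_def)
  have "q * (lp + lm) < lp - lm" using q(1) lpm lm_pos by (simp add: field_simps)
  then have "(1 + q) * lm < lp * (1 - q)" by (simp add: algebra_simps)
  then show ?thesis using q lm_pos unfolding al_def q_def[symmetric]
    by (simp add: field_simps)
qed

lemma gm_pos: "gm > 0"
proof (cases "t = \<infinity>")
  case True then show ?thesis using al_gt1 unfolding gm_def gfun_def al_def[symmetric] by simp
next
  case False
  have r: "(1 + qexp t) / (1 - qexp t) < al" by (rule ratio_lt_al[OF False])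
  have rp: "(1 + qexp t) / (1 - qexp t) > 0" using q_range by simp
  have "ln ((1 + qexp t) / (1 - qexp t)) < ln al" using r rp by simp
  then show ?thesis using False by (simp add: gm_def gfun_def al_def[symmetric])
qed

lemma g_ge: "-1 \<le> m \<Longrightarrow> m \<le> 1 \<Longrightarrow> gfun lp lm t m \<ge> gm"
proof -
  assume m: "-1 \<le> m" "m \<le> 1"
  have "ln ((1 + qexp t) / (1 - qexp t)) \<ge> 0" using q_range by simp
  then have "(-1) * ln ((1 + qexp t) / (1 - qexp t)) \<le> m * ln ((1 + qexp t) / (1 - qexp t))"
    using m by (intro mult_right_mono) auto
  then show ?thesis by (simp add: gm_def gfun_def)
qed

lemma ptr_pos: "ptr t s s' > 0"
  using q_range by (auto simp: ptr_def)

lemma ptr_sum: "ptr t s True + ptr t s False = 1"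
  by (cases s) (auto simp: ptr_def field_simps)

lemma ptr_cmp: "ptr t False s \<le> al * ptr t True s"
proof (cases "t = \<infinity>")
  case True then show ?thesis using al_gt1 by (simp add: ptr_def)
next
  case False
  have q: "0 \<le> qexp t" "qexp t < 1" by (rule q_range)+
  show ?thesis
  proof (cases s)
    case True
    have "(1 - qexp t) / 2 \<le> (1 + qexp t) / 2" using q by simp
    also have "\<dots> \<le> al * ((1 + qexp t) / 2)" using al_gt1 q mult_right_mono[of 1 al "(1 + qexp t) / 2"] by simp
    finally show ?thesis using True False by (simp add: ptr_def)
  next
    case s: False
    have "(1 + qexp t) / (1 - qexp t) < al" by (rule ratio_lt_al[OF False])
    then have "(1 + qexp t) \<le> al * (1 - qexp t)" using q by (simp add: field_simps)
    then show ?thesis using False s by (simp add: ptr_def)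
  qed
qed

end


lemma linked_sym: "(u, v) \<in> linked a V \<Longrightarrow> (v, u) \<in> linked a V"
  by (auto simp: linked_def dist_commute)

lemma linked_mem: "(u, v) \<in> linked a V \<Longrightarrow> u \<in> V \<and> v \<in> V \<and> dist u v < 2 * a"
  by (auto simp: linked_def)

lemma rtrancl_linked_sym: "(u, v) \<in> (linked a V)\<^sup>* \<Longrightarrow> (v, u) \<in> (linked a V)\<^sup>*"
proof (induction rule: rtrancl_induct)
  case base then show ?case by simp
next
  case (step y z)
  then show ?case using linked_sym[OF step(2)] by (meson converse_rtrancl_into_rtrancl)
qed

lemma cluster_refl: "x \<in> cluster a V x"
  by (simp add: cluster_def)

lemma cluster_sub: "x \<in> V \<Longrightarrow> cluster a V x \<subseteq> V"
proof
  fix y assume x: "x \<in> V" and "y \<in> cluster a V x"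
  then have "(x, y) \<in> (linked a V)\<^sup>*" by (simp add: cluster_def)
  then show "y \<in> V" using x by (induction rule: rtrancl_induct) (auto simp: linked_def)
qed

lemma cluster_eq: "y \<in> cluster a V x \<Longrightarrow> cluster a V y = cluster a V x"
proof -
  assume "y \<in> cluster a V x"
  then have xy: "(x, y) \<in> (linked a V)\<^sup>*" by (simp add: cluster_def)
  then have yx: "(y, x) \<in> (linked a V)\<^sup>*" by (rule rtrancl_linked_sym)
  show ?thesis unfolding cluster_def using xy yx rtrancl_trans by metis
qed

lemma cluster_step: "y \<in> cluster a V x \<Longrightarrow> (y, z) \<in> linked a V \<Longrightarrow> z \<in> cluster a V x"
  unfolding cluster_def by (auto intro: rtrancl_into_rtrancl)

lemma cluster_closed_sub:
  assumes "x \<in> S" and "\<And>y z. y \<in> S \<Longrightarrow> (y, z) \<in> linked a V \<Longrightarrow> z \<in> S"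
  shows "cluster a V x \<subseteq> S"
proof
  fix y assume "y \<in> cluster a V x"
  then have "(x, y) \<in> (linked a V)\<^sup>*" by (simp add: cluster_def)
  then show "y \<in> S" by (induction rule: rtrancl_induct) (use assms in auto)
qed

lemma linked_mono: "V \<subseteq> V' \<Longrightarrow> linked a V \<subseteq> linked a V'"
  by (auto simp: linked_def)

lemma cluster_mono: "V \<subseteq> V' \<Longrightarrow> cluster a V x \<subseteq> cluster a V' x"
  unfolding cluster_def using rtrancl_mono[OF linked_mono] by blast

lemma clusters_eq: "C \<in> clusters a V \<Longrightarrow> z \<in> C \<Longrightarrow> C = cluster a V z"
  by (auto simp: clusters_def dest: cluster_eq)

lemma clusters_sub: "C \<in> clusters a V \<Longrightarrow> C \<subseteq> V"
  by (auto simp: clusters_def dest: cluster_sub)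

lemma clusters_disj: "C1 \<in> clusters a V \<Longrightarrow> C2 \<in> clusters a V \<Longrightarrow> z \<in> C1 \<Longrightarrow> z \<in> C2 \<Longrightarrow> C1 = C2"
  using clusters_eq by metis

lemma clusters_far: "C1 \<in> clusters a V \<Longrightarrow> C2 \<in> clusters a V \<Longrightarrow> C1 \<noteq> C2 \<Longrightarrow> u \<in> C1 \<Longrightarrow> v \<in> C2
   \<Longrightarrow> dist u v \<ge> 2 * a"
proof (rule ccontr)
  assume c: "C1 \<in> clusters a V" "C2 \<in> clusters a V" "C1 \<noteq> C2" "u \<in> C1" "v \<in> C2" "\<not> dist u v \<ge> 2 * a"
  have "u \<in> V" "v \<in> V" using c clusters_sub by blast+
  then have "(u, v) \<in> linked a V" using c by (auto simp: linked_def)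
  then have "v \<in> cluster a V u" using cluster_step[OF cluster_refl] by blast
  then have "v \<in> C1" using clusters_eq[OF c(1) c(4)] by simp
  then show False using clusters_disj c by blast
qed

lemma cluster_in_clusters: "z \<in> V \<Longrightarrow> cluster a V z \<in> clusters a V"
  by (auto simp: clusters_def)

lemma cluster_iso:
  assumes bij: "bij_betw h V V'" and lk: "\<And>u v. u \<in> V \<Longrightarrow> v \<in> V \<Longrightarrow> dist (h u) (h v) < 2 * a \<longleftrightarrow> dist u v < 2 * a"
    and z: "z \<in> V"
  shows "cluster a V' (h z) = h ` cluster a V z"
proof
  have hV: "h ` V = V'" using bij by (simp add: bij_betw_def)
  have inj: "inj_on h V" using bij by (simp add: bij_betw_def)
  show "h ` cluster a V z \<subseteq> cluster a V' (h z)"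
  proof -
    have "cluster a V z \<subseteq> {u \<in> V. h u \<in> cluster a V' (h z)}"
    proof (rule cluster_closed_sub)
      show "z \<in> {u \<in> V. h u \<in> cluster a V' (h z)}" using z cluster_refl by blast
      fix y w assume y: "y \<in> {u \<in> V. h u \<in> cluster a V' (h z)}" and yw: "(y, w) \<in> linked a V"
      have "(h y, h w) \<in> linked a V'" using yw lk hV by (auto simp: linked_def)
      then show "w \<in> {u \<in> V. h u \<in> cluster a V' (h z)}" using y yw cluster_step linked_mem by fastforce
    qed
    then show ?thesis by blast
  qed
  show "cluster a V' (h z) \<subseteq> h ` cluster a V z"
  proof (rule cluster_closed_sub)
    show "h z \<in> h ` cluster a V z" using cluster_refl by blast
    fix y w assume y: "y \<in> h ` cluster a V z" and yw: "(y, w) \<in> linked a V'"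
    obtain y0 where y0: "y0 \<in> cluster a V z" "y = h y0" using y by blast
    have y0V: "y0 \<in> V" using y0 cluster_sub z by blast
    have "w \<in> V'" using yw linked_mem by blast
    then obtain w0 where w0: "w0 \<in> V" "w = h w0" using hV by blast
    have "(y0, w0) \<in> linked a V" using yw y0 w0 y0V lk by (auto simp: linked_def)
    then show "w \<in> h ` cluster a V z" using cluster_step y0 w0 by blast
  qed
qed

lemma clusters_iso:
  assumes bij: "bij_betw h V V'" and lk: "\<And>u v. u \<in> V \<Longrightarrow> v \<in> V \<Longrightarrow> dist (h u) (h v) < 2 * a \<longleftrightarrow> dist u v < 2 * a"
  shows "clusters a V' = (\<lambda>C. h ` C) ` clusters a V"
proof -
  have hV: "h ` V = V'" using bij by (simp add: bij_betw_def)
  show ?thesis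
    unfolding clusters_def using cluster_iso[OF bij lk] hV by auto
qed


lemma sum_Pow_Un:
  assumes "finite A" "finite R" "A \<inter> R = {}"
  shows "sum g (Pow (A \<union> R)) = (\<Sum>T\<in>Pow A. \<Sum>T'\<in>Pow R. g (T \<union> T'))"
proof -
  have eq: "Pow (A \<union> R) = (\<lambda>(T, T'). T \<union> T') ` (Pow A \<times> Pow R)"
  proof
    show "Pow (A \<union> R) \<subseteq> (\<lambda>(T, T'). T \<union> T') ` (Pow A \<times> Pow R)"
    proof
      fix S assume "S \<in> Pow (A \<union> R)"
      then have "S = (S \<inter> A) \<union> (S \<inter> R)" "(S \<inter> A, S \<inter> R) \<in> Pow A \<times> Pow R" by auto
      then show "S \<in> (\<lambda>(T, T'). T \<union> T') ` (Pow A \<times> Pow R)" by (metis (no_types, lifting) case_prod_conv image_eqI)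
    qed
  qed auto
  have inj: "inj_on (\<lambda>(T, T'). T \<union> T') (Pow A \<times> Pow R)"
  proof (rule inj_onI, clarsimp)
    fix T1 T1' T2 T2' assume "T1 \<subseteq> A" "T1' \<subseteq> R" "T2 \<subseteq> A" "T2' \<subseteq> R" "T1 \<union> T1' = T2 \<union> T2'"
    then show "T1 = T2 \<and> T1' = T2'" using assms(3) by blast
  qed
  have "sum g (Pow (A \<union> R)) = sum (g \<circ> (\<lambda>(T, T'). T \<union> T')) (Pow A \<times> Pow R)"
    by (subst eq, rule sum.reindex[OF inj])
  also have "\<dots> = (\<Sum>T\<in>Pow A. \<Sum>T'\<in>Pow R. g (T \<union> T'))"
    by (simp add: sum.cartesian_product case_prod_beta comp_def)
  finally show ?thesis .
qed

lemma prod_sum_Pow: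
  fixes h :: "'c \<Rightarrow> 'a set \<Rightarrow> real"
  assumes "finite F" "\<forall>C\<in>F. finite (X C)" "\<forall>C\<in>F. \<forall>D\<in>F. C \<noteq> D \<longrightarrow> X C \<inter> X D = {}"
  shows "(\<Sum>S\<in>Pow (\<Union>C\<in>F. X C). \<Prod>C\<in>F. h C (S \<inter> X C)) = (\<Prod>C\<in>F. \<Sum>T\<in>Pow (X C). h C T)"
  using assms
proof (induction F rule: finite_induct)
  case empty then show ?case by simp
next
  case (insert C0 F)
  define R where "R = (\<Union>C\<in>F. X C)"
  have fin: "finite (X C0)" "finite R" using insert by (auto simp: R_def)
  have disj: "X C0 \<inter> R = {}" using insert.prems insert.hyps by (auto simp: R_def)
  have U: "(\<Union>C\<in>insert C0 F. X C) = X C0 \<union> R" by (simp add: R_def)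
  have "(\<Sum>S\<in>Pow (X C0 \<union> R). \<Prod>C\<in>insert C0 F. h C (S \<inter> X C))
      = (\<Sum>T\<in>Pow (X C0). \<Sum>T'\<in>Pow R. \<Prod>C\<in>insert C0 F. h C ((T \<union> T') \<inter> X C))"
    by (rule sum_Pow_Un[OF fin disj])
  also have "\<dots> = (\<Sum>T\<in>Pow (X C0). \<Sum>T'\<in>Pow R. h C0 T * (\<Prod>C\<in>F. h C (T' \<inter> X C)))"
  proof (intro sum.cong refl)
    fix T T' assume T: "T \<in> Pow (X C0)" and T': "T' \<in> Pow R"
    have 1: "(T \<union> T') \<inter> X C0 = T" using T T' disj by auto
    have 2: "(T \<union> T') \<inter> X C = T' \<inter> X C" if "C \<in> F" for C
    proof -
      have "X C0 \<inter> X C = {}" using insert.prems insert.hyps that by auto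
      then show ?thesis using T by auto
    qed
    show "(\<Prod>C\<in>insert C0 F. h C ((T \<union> T') \<inter> X C)) = h C0 T * (\<Prod>C\<in>F. h C (T' \<inter> X C))"
      using insert.hyps 1 2 by (simp add: prod.insert)
  qed
  also have "\<dots> = (\<Sum>T\<in>Pow (X C0). h C0 T) * (\<Sum>T'\<in>Pow R. \<Prod>C\<in>F. h C (T' \<inter> X C))"
    by (simp add: sum_product)
  also have "(\<Sum>T'\<in>Pow R. \<Prod>C\<in>F. h C (T' \<inter> X C)) = (\<Prod>C\<in>F. \<Sum>T\<in>Pow (X C). h C T)"
    unfolding R_def using insert by auto
  finally show ?case using U insert.hyps by (simp add: prod.insert)
qed

lemma sum_Pow_binom:
  fixes p q :: real
  assumes "finite X"
  shows "(\<Sum>T\<in>Pow X. p ^ card T * q ^ card (X - T)) = (p + q) ^ card X"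
  using assms
proof (induction X rule: finite_induct)
  case empty then show ?case by simp
next
  case (insert x X)
  have "(\<Sum>T\<in>Pow ({x} \<union> X). p ^ card T * q ^ card (insert x X - T))
     = (\<Sum>T\<in>Pow {x}. \<Sum>T'\<in>Pow X. p ^ card (T \<union> T') * q ^ card (insert x X - (T \<union> T')))"
    by (rule sum_Pow_Un) (use insert in auto)
  also have "\<dots> = (\<Sum>T'\<in>Pow X. p ^ card T' * q ^ card (X - T')) * q
       + (\<Sum>T'\<in>Pow X. p ^ card T' * q ^ card (X - T')) * p"
  proof -
    have Pw: "Pow {x} = {{}, {x}}" by auto
    have a: "card (insert x X - T') = Suc (card (X - T'))" if "T' \<in> Pow X" for T'
    proof -
      have "insert x X - T' = insert x (X - T')" using that insert.hyps by auto
      then show ?thesis using insert.hyps by simp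
    qed
    have b: "card ({x} \<union> T') = Suc (card T')" "insert x X - ({x} \<union> T') = X - T'" if "T' \<in> Pow X" for T'
    proof -
      have "x \<notin> T'" "finite T'" using that insert.hyps finite_subset[of T' X] by auto
      then show "card ({x} \<union> T') = Suc (card T')" by simp
      show "insert x X - ({x} \<union> T') = X - T'" using that insert.hyps by auto
    qed
    have s1: "(\<Sum>T'\<in>Pow X. p ^ card ({} \<union> T') * q ^ card (insert x X - ({} \<union> T')))
        = (\<Sum>T'\<in>Pow X. p ^ card T' * q ^ card (X - T')) * q"
      unfolding sum_distrib_right by (intro sum.cong refl) (simp add: a)
    have s2: "(\<Sum>T'\<in>Pow X. p ^ card ({x} \<union> T') * q ^ card (insert x X - ({x} \<union> T')))
        = (\<Sum>T'\<in>Pow X. p ^ card T' * q ^ card (X - T')) * p"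
      unfolding sum_distrib_right by (intro sum.cong refl) (simp only: b, simp)
    have ne: "{} \<noteq> {x}" by simp
    show ?thesis unfolding Pw using s1 s2 ne by (simp only: sum.insert_if finite.emptyI finite_insert, simp)
  qed
  also have "\<dots> = (p + q) ^ card (insert x X)" using insert by (simp add: algebra_simps)
  finally show ?case by simp
qed


definition piP :: "ereal \<Rightarrow> 'a set \<Rightarrow> 'a set \<Rightarrow> real" where
  "piP t X T = ptr t True True ^ card T * ptr t True False ^ card (X - T)"
definition piM :: "ereal \<Rightarrow> 'a set \<Rightarrow> 'a set \<Rightarrow> real" where
  "piM t X T = ptr t False True ^ card T * ptr t False False ^ card (X - T)"

definition uC :: "real \<Rightarrow> real \<Rightarrow> ereal \<Rightarrow> ('d::finite) pt set \<Rightarrow> 'd ccfg \<Rightarrow> 'd pt set \<Rightarrow> 'd pt set \<Rightarrow> real" where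
  "uC lp lm t L eta S C = (if finite C then
      (lp / lm) ^ card (C \<inter> L) * piP t (C \<inter> L) (S \<inter> (C \<inter> L))
        + piM t (C \<inter> L) (S \<inter> (C \<inter> L)) * rho lp lm t (restr eta (C - L))
    else (lp / lm) ^ card (C \<inter> L) * piP t (C \<inter> L) (S \<inter> (C \<inter> L)))"

definition nf :: "real \<Rightarrow> real \<Rightarrow> ereal \<Rightarrow> ('d::finite) pt set \<Rightarrow> 'd ccfg \<Rightarrow> 'd pt set \<Rightarrow> 'd pt set \<Rightarrow> real" where
  "nf lp lm t L eta C T = (if finite C then
      ((lp / lm) ^ card (C \<inter> L) * piP t (C \<inter> L) T + piM t (C \<inter> L) T * rho lp lm t (restr eta (C - L)))
      / ((lp / lm) ^ card (C \<inter> L) + rho lp lm t (restr eta (C - L)))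
    else piP t (C \<inter> L) T)"

lemma diff_Int_eq: "X - S = X - (S \<inter> X)" by auto

context setup0
begin

lemma rho_pos: "rho lp lm t w > 0" by (simp add: rho_def)

lemma den_pos: "(lp / lm) ^ k + rho lp lm t w > 0"
  using rho_pos[of w] lpm lm_pos by (intro add_pos_pos) auto

lemma prod_split_fin:
  assumes "finite F"
  shows "prod g F = prod g {C \<in> F. finite C} * prod g {C \<in> F. infinite C}"
proof -
  have "F = {C \<in> F. finite C} \<union> {C \<in> F. infinite C}" by auto
  then have "prod g F = prod g ({C \<in> F. finite C} \<union> {C \<in> F. infinite C})" by simp
  also have "\<dots> = prod g {C \<in> F. finite C} * prod g {C \<in> F. infinite C}"
    by (rule prod.union_disjoint) (use assms in auto)
  finally show ?thesis .
qed

lemma nuinf_nf: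
  assumes "finite (CL a L eta \<omega>L)"
  shows "nuinf a lp lm t L eta \<omega>L S = (\<Prod>C\<in>CL a L eta \<omega>L. nf lp lm t L eta C (S \<inter> (C \<inter> L)))"
  unfolding prod_split_fin[OF assms, of "\<lambda>C. nf lp lm t L eta C (S \<inter> (C \<inter> L))"] nuinf_def
  by (subst mult.commute, intro arg_cong2[where f="(*)"] prod.cong refl)
     (auto simp: nf_def piP_def piM_def diff_Int_eq[of "C \<inter> L" S for C])

lemma Wnu:
  assumes "finite (CL a L eta \<omega>L)"
  shows "Wt a lp lm t L eta \<omega>L * nuinf a lp lm t L eta \<omega>L S = (\<Prod>C\<in>CL a L eta \<omega>L. uC lp lm t L eta S C)"
proof -
  let ?F = "CL a L eta \<omega>L"
  have "Wt a lp lm t L eta \<omega>L * nuinf a lp lm t L eta \<omega>L S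
     = (\<Prod>C\<in>{C \<in> ?F. finite C}. ((lp / lm) ^ card (C \<inter> L) + rho lp lm t (restr eta (C - L))) * nf lp lm t L eta C (S \<inter> (C \<inter> L)))
     * (\<Prod>C\<in>{C \<in> ?F. infinite C}. (lp / lm) ^ card (C \<inter> L) * nf lp lm t L eta C (S \<inter> (C \<inter> L)))"
    unfolding Wt_def nuinf_nf[OF assms] prod_split_fin[OF assms, of "\<lambda>C. nf lp lm t L eta C (S \<inter> (C \<inter> L))"]
    by (simp add: prod.distrib mult_ac)
  also have "\<dots> = (\<Prod>C\<in>{C \<in> ?F. finite C}. uC lp lm t L eta S C) * (\<Prod>C\<in>{C \<in> ?F. infinite C}. uC lp lm t L eta S C)"
  proof (intro arg_cong2[where f="(*)"] prod.cong refl)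
    fix C assume "C \<in> {C \<in> ?F. finite C}"
    then show "((lp / lm) ^ card (C \<inter> L) + rho lp lm t (restr eta (C - L))) * nf lp lm t L eta C (S \<inter> (C \<inter> L)) = uC lp lm t L eta S C"
      using den_pos[of "card (C \<inter> L)" "restr eta (C - L)"] by (simp add: nf_def uC_def)
  next
    fix C assume "C \<in> {C \<in> ?F. infinite C}"
    then show "(lp / lm) ^ card (C \<inter> L) * nf lp lm t L eta C (S \<inter> (C \<inter> L)) = uC lp lm t L eta S C"
      by (simp add: nf_def uC_def)
  qed
  also have "\<dots> = (\<Prod>C\<in>?F. uC lp lm t L eta S C)" by (rule prod_split_fin[OF assms, symmetric])
  finally show ?thesis .
qed

lemma nf_sum:
  assumes "finite (C \<inter> L)"
  shows "(\<Sum>T\<in>Pow (C \<inter> L). nf lp lm t L eta C T) = 1"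
proof -
  have P: "(\<Sum>T\<in>Pow (C \<inter> L). piP t (C \<inter> L) T) = 1"
    unfolding piP_def by (subst sum_Pow_binom[OF assms]) (simp add: ptr_sum)
  have M: "(\<Sum>T\<in>Pow (C \<inter> L). piM t (C \<inter> L) T) = 1"
    unfolding piM_def by (subst sum_Pow_binom[OF assms]) (simp add: ptr_sum)
  show ?thesis
  proof (cases "finite C")
    case True
    have "(\<Sum>T\<in>Pow (C \<inter> L). nf lp lm t L eta C T)
       = ((lp / lm) ^ card (C \<inter> L) * (\<Sum>T\<in>Pow (C \<inter> L). piP t (C \<inter> L) T) + (\<Sum>T\<in>Pow (C \<inter> L). piM t (C \<inter> L) T) * rho lp lm t (restr eta (C - L)))
         / ((lp / lm) ^ card (C \<inter> L) + rho lp lm t (restr eta (C - L)))"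
      using True by (simp add: nf_def sum_divide_distrib[symmetric] sum_distrib_left sum_distrib_right sum.distrib)
    also have "\<dots> = 1" unfolding P M using den_pos[of "card (C \<inter> L)" "restr eta (C - L)"] by simp
    finally show ?thesis .
  next
    case False then show ?thesis using P by (simp add: nf_def)
  qed
qed

lemma nu_sum:
  assumes fin: "finite (CL a L eta \<omega>L)" and finw: "finite \<omega>L"
    and cov: "(\<Union>C\<in>CL a L eta \<omega>L. C \<inter> L) = \<omega>L"
    and disj: "\<forall>C\<in>CL a L eta \<omega>L. \<forall>D\<in>CL a L eta \<omega>L. C \<noteq> D \<longrightarrow> C \<inter> D = {}"
  shows "(\<Sum>S\<in>Pow \<omega>L. nuinf a lp lm t L eta \<omega>L S) = 1"
proof -
  have fC: "\<forall>C\<in>CL a L eta \<omega>L. finite (C \<inter> L)" using cov finw by (metis UN_upper finite_subset)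
  have "(\<Sum>S\<in>Pow \<omega>L. nuinf a lp lm t L eta \<omega>L S)
     = (\<Sum>S\<in>Pow (\<Union>C\<in>CL a L eta \<omega>L. C \<inter> L). \<Prod>C\<in>CL a L eta \<omega>L. nf lp lm t L eta C (S \<inter> (C \<inter> L)))"
    unfolding cov nuinf_nf[OF fin] ..
  also have "\<dots> = (\<Prod>C\<in>CL a L eta \<omega>L. \<Sum>T\<in>Pow (C \<inter> L). nf lp lm t L eta C T)"
    by (rule prod_sum_Pow[OF fin fC]) (use disj in blast)
  also have "\<dots> = 1" using fC nf_sum by (intro prod.neutral) blast
  finally show ?thesis .
qed

end


lemma packing:
  fixes Q :: "('a::euclidean_space) set"
  assumes finQ: "finite Q" and sub: "Q \<subseteq> ball c R" and a: "a > 0" and R: "R \<ge> 0"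
    and sep: "\<forall>p\<in>Q. \<forall>q\<in>Q. p \<noteq> q \<longrightarrow> dist p q \<ge> 2*a"
  shows "real (card Q) \<le> ((R + a)/a) ^ DIM('a)"
proof -
  define V where "V = unit_ball_vol (real DIM('a))"
  have Vpos: "V > 0" by (simp add: V_def)
  have disj: "disjoint_family_on (\<lambda>q. ball q a) Q"
    unfolding disjoint_family_on_def
  proof (intro ballI impI)
    fix p q assume pq: "p \<in> Q" "q \<in> Q" "p \<noteq> q"
    show "ball p a \<inter> ball q a = {}"
    proof (rule ccontr)
      assume "ball p a \<inter> ball q a \<noteq> {}"
      then obtain z where "dist p z < a" "dist q z < a" by auto
      then have "dist p q < 2 * a" using dist_triangle3[of p q z] by (simp add: dist_commute)
      then show False using sep pq by force
    qed
  qed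
  have "(\<Sum>q\<in>Q. emeasure lborel (ball q a)) = emeasure lborel (\<Union>q\<in>Q. ball q a)"
    by (rule sum_emeasure) (use disj finQ in auto)
  also have "\<dots> \<le> emeasure lborel (ball c (R + a))"
  proof (rule emeasure_mono)
    show "(\<Union>q\<in>Q. ball q a) \<subseteq> ball c (R + a)"
    proof
      fix z assume "z \<in> (\<Union>q\<in>Q. ball q a)"
      then obtain q where q: "q \<in> Q" "dist q z < a" by auto
      have "dist c q < R" using q sub by auto
      then show "z \<in> ball c (R + a)" using q dist_triangle[of c z q] by simp
    qed
  qed simp
  moreover have "emeasure lborel (ball q a) = ennreal (V * a ^ DIM('a))" for q :: 'a
    using emeasure_ball[of a q] a by (simp add: V_def)
  moreover have "emeasure lborel (ball c (R + a)) = ennreal (V * (R + a) ^ DIM('a))"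
    using emeasure_ball[of "R + a" c] a R by (simp add: V_def)
  ultimately have "(\<Sum>q\<in>Q. ennreal (V * a ^ DIM('a))) \<le> ennreal (V * (R + a) ^ DIM('a))"
    by simp
  then have "ennreal (real (card Q) * (V * a ^ DIM('a))) \<le> ennreal (V * (R + a) ^ DIM('a))"
    by (simp add: ennreal_of_nat_eq_real_of_nat ennreal_mult' mult.commute)
  then have "real (card Q) * (V * a ^ DIM('a)) \<le> V * (R + a) ^ DIM('a)"
    using Vpos a R by (subst (asm) ennreal_le_iff) auto
  then have "real (card Q) * a ^ DIM('a) \<le> (R + a) ^ DIM('a)" using Vpos by (simp add: mult.left_commute)
  then show ?thesis using a by (simp add: power_divide field_simps)
qed

lemma layer:
  assumes a: "a > 0" and C: "C \<in> clusters a V" and finC: "finite C" and x0: "x0 \<in> C"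
    and x0B: "infdist x0 B < 2 * a" and y: "y \<in> C"
  shows "infdist y B < 2 * a * (real (card (C - B)) + 2)"
proof (rule ccontr)
  define N where "N = card (C - B)"
  assume "\<not> infdist y B < 2 * a * (real (card (C - B)) + 2)"
  then have yb: "infdist y B \<ge> 2 * a * (real N + 2)" by (simp add: N_def)
  have Cx0: "C = cluster a V x0" using clusters_eq[OF C x0] .
  have ex: "\<exists>z\<in>C. 2 * a * real j \<le> infdist z B \<and> infdist z B < 2 * a * (real j + 1)"
    if j: "j \<in> {1..N+1}" for j
  proof (rule ccontr)
    assume ne: "\<not> ?thesis"
    define T where "T = {z \<in> C. infdist z B < 2 * a * real j}"
    have "cluster a V x0 \<subseteq> T"
    proof (rule cluster_closed_sub)
      have "2 * a \<le> 2 * a * real j" using j a by simp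
      then show "x0 \<in> T" using x0 x0B by (simp add: T_def)
      fix z z' assume z: "z \<in> T" and zz: "(z, z') \<in> linked a V"
      have z'C: "z' \<in> C" using Cx0 z zz cluster_step by (auto simp: T_def)
      have "infdist z' B \<le> infdist z B + dist z' z" by (rule infdist_triangle)
      also have "\<dots> < 2 * a * real j + 2 * a" using z zz by (auto simp: T_def linked_def dist_commute)
      finally have "infdist z' B < 2 * a * (real j + 1)" by (simp add: algebra_simps)
      then show "z' \<in> T" using ne z'C by (auto simp: T_def)
    qed
    then have "y \<in> T" using y Cx0 by auto
    then have "infdist y B < 2 * a * real j" by (simp add: T_def)
    moreover have "2 * a * real j \<le> 2 * a * (real N + 2)" using j a by simp
    ultimately show False using yb by simp
  qed
  define f where "f j = (SOME z. z \<in> C \<and> 2 * a * real j \<le> infdist z B \<and> infdist z B < 2 * a * (real j + 1))" for j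
  have f: "f j \<in> C \<and> 2 * a * real j \<le> infdist (f j) B \<and> infdist (f j) B < 2 * a * (real j + 1)"
    if "j \<in> {1..N+1}" for j
    unfolding f_def using ex[OF that] by (rule someI2_bex) blast
  have fin: "f ` {1..N+1} \<subseteq> C - B"
  proof
    fix z assume "z \<in> f ` {1..N+1}"
    then obtain j where j: "j \<in> {1..N+1}" "z = f j" by auto
    have "2 * a \<le> 2 * a * real j" using j a by simp
    then have "2 * a \<le> infdist (f j) B" using f[OF j(1)] by linarith
    then have "infdist z B > 0" using j(2) a by simp
    then show "z \<in> C - B" using f[OF j(1)] j by auto
  qed
  have inj: "inj_on f {1..N+1}"
  proof (rule inj_onI)
    fix j k assume jk: "j \<in> {1..N+1}" "k \<in> {1..N+1}" "f j = f k"
    have "2 * a * real j < 2 * a * (real k + 1)" "2 * a * real k < 2 * a * (real j + 1)"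
      using f[OF jk(1)] f[OF jk(2)] jk(3) by auto
    then have "real j < real k + 1" "real k < real j + 1" using a by (simp_all add: mult_less_cancel_left_pos)
    then show "j = k" by linarith
  qed
  have "card {1..N+1} \<le> card (C - B)"
    by (rule card_inj_on_le[OF inj fin]) (use finC in simp)
  then show False by (simp add: N_def)
qed


lemma grey_restr: "grey (restr w D) = grey w \<inter> D"
  by (auto simp: grey_def restr_def)
lemma grey_cat: "grey (cat u v) = grey u \<union> grey v"
  by (auto simp: grey_def cat_def)
lemma restr_cat: "restr (cat u v) D = cat (restr u D) (restr v D)"
  by (auto simp: cat_def restr_def)
lemma restr_restr: "restr (restr u D) D' = restr u (D \<inter> D')"
  by (auto simp: restr_def)

lemma magn_bounds: "-1 \<le> magn w \<and> magn w \<le> 1"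
proof (cases "finite (grey w) \<and> grey w \<noteq> {}")
  case True
  let ?s = "(\<Sum>x\<in>grey w. if x \<in> fst w then 1 else -1 :: real)"
  have "\<bar>?s\<bar> \<le> (\<Sum>x\<in>grey w. \<bar>if x \<in> fst w then 1 else -1 :: real\<bar>)" by (rule sum_abs)
  also have "\<dots> = (\<Sum>x\<in>grey w. 1)" by (intro sum.cong) auto
  also have "\<dots> = real (card (grey w))" by simp
  finally have "\<bar>?s\<bar> \<le> real (card (grey w))" .
  moreover have "card (grey w) > 0" using True by (simp add: card_gt_0_iff)
  ultimately show ?thesis unfolding magn_def by (auto simp: divide_le_eq le_divide_eq abs_le_iff)
next
  case False
  then have "card (grey w) = 0" by auto
  then show ?thesis by (simp add: magn_def)
qed

context setup0
begin

lemma rho_le_exp: "rho lp lm t w \<le> exp (- real (card (grey w)) * gm)"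
proof -
  have "gfun lp lm t (magn w) \<ge> gm" using g_ge magn_bounds by blast
  then have "real (card (grey w)) * gm \<le> real (card (grey w)) * gfun lp lm t (magn w)"
    by (intro mult_left_mono) auto
  then show ?thesis by (simp add: rho_def)
qed

lemma rho_le1: "rho lp lm t w \<le> 1"
proof -
  have "exp (- real (card (grey w)) * gm) \<le> 1" using gm_pos by simp
  then show ?thesis using rho_le_exp[of w] by linarith
qed

lemma piP_nonneg: "piP t X T \<ge> 0" using ptr_pos by (simp add: piP_def less_imp_le)
lemma piM_nonneg: "piM t X T \<ge> 0" using ptr_pos by (simp add: piM_def less_imp_le)

lemma piM_le:
  assumes "finite X" "T \<subseteq> X"
  shows "piM t X T \<le> al ^ card X * piP t X T"
proof -
  have c: "card X = card T + card (X - T)" using assms by (metis card_Un_disjoint Diff_disjoint Un_Diff_cancel sup.absorb_iff2 finite_Diff finite_subset)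
  have "piM t X T \<le> (al * ptr t True True) ^ card T * (al * ptr t True False) ^ card (X - T)"
    unfolding piM_def using ptr_pos ptr_cmp al_gt1
    by (intro mult_mono power_mono) (auto intro: less_imp_le mult_nonneg_nonneg)
  also have "\<dots> = al ^ card X * piP t X T" by (simp add: c piP_def power_mult_distrib power_add)
  finally show ?thesis .
qed

lemma uC_nonneg: "uC lp lm t L eta S C \<ge> 0"
proof -
  have "0 \<le> lp / lm" using lpm lm_pos by simp
  moreover have "0 \<le> rho lp lm t (restr eta (C - L))" using rho_pos less_imp_le by blast
  ultimately show ?thesis using piP_nonneg piM_nonneg
    unfolding uC_def by (auto intro!: add_nonneg_nonneg mult_nonneg_nonneg)
qed

lemma uC_bounds:
  assumes "finite (C \<inter> L)" "rho lp lm t (restr eta (C - L)) \<le> k"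
  shows "al ^ card (C \<inter> L) * piP t (C \<inter> L) (S \<inter> (C \<inter> L)) \<le> uC lp lm t L eta S C
      \<and> uC lp lm t L eta S C \<le> (1 + k) * (al ^ card (C \<inter> L) * piP t (C \<inter> L) (S \<inter> (C \<inter> L)))"
proof -
  let ?X = "C \<inter> L" and ?T = "S \<inter> (C \<inter> L)"
  have r0: "rho lp lm t (restr eta (C - L)) \<ge> 0" using rho_pos less_imp_le by blast
  have k0: "k \<ge> 0" using r0 assms(2) by linarith
  have lowpos: "al ^ card ?X * piP t ?X ?T \<ge> 0" using piP_nonneg al_gt1 by (intro mult_nonneg_nonneg) auto
  have pm: "piM t ?X ?T \<le> al ^ card ?X * piP t ?X ?T" by (rule piM_le[OF assms(1)]) blast
  have "piM t ?X ?T * rho lp lm t (restr eta (C - L)) \<le> (al ^ card ?X * piP t ?X ?T) * k"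
    by (rule mult_mono[OF pm assms(2) lowpos r0])
  moreover have "0 \<le> piM t ?X ?T * rho lp lm t (restr eta (C - L))"
    using piM_nonneg r0 by (rule mult_nonneg_nonneg)
  ultimately show ?thesis using lowpos k0
    unfolding uC_def al_def[symmetric] by (simp add: distrib_right mult.commute)
qed

end

lemma card_UN_disj_fam:
  assumes "finite F" "\<forall>C\<in>F. finite (X C)" "\<forall>C\<in>F. \<forall>D\<in>F. C \<noteq> D \<longrightarrow> X C \<inter> X D = {}"
  shows "card (\<Union>C\<in>F. X C) = (\<Sum>C\<in>F. card (X C))"
  using assms by (intro card_UN_disjoint) auto

lemma prod_low:
  fixes al p q :: real
  assumes fin: "finite F" and fX: "\<forall>C\<in>F. finite (X C)" and dj: "\<forall>C\<in>F. \<forall>D\<in>F. C \<noteq> D \<longrightarrow> X C \<inter> X D = {}"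
  shows "(\<Prod>C\<in>F. al ^ card (X C) * (p ^ card (S \<inter> X C) * q ^ card (X C - S \<inter> X C)))
    = al ^ card (\<Union>C\<in>F. X C) * (p ^ card (S \<inter> (\<Union>C\<in>F. X C)) * q ^ card ((\<Union>C\<in>F. X C) - S \<inter> (\<Union>C\<in>F. X C)))"
proof -
  have 1: "card (\<Union>C\<in>F. X C) = (\<Sum>C\<in>F. card (X C))" by (rule card_UN_disj_fam[OF fin fX dj])
  have "S \<inter> (\<Union>C\<in>F. X C) = (\<Union>C\<in>F. S \<inter> X C)" by auto
  moreover have "card (\<Union>C\<in>F. S \<inter> X C) = (\<Sum>C\<in>F. card (S \<inter> X C))"
    by (rule card_UN_disj_fam[OF fin]) (use fX dj in auto)
  ultimately have 2: "card (S \<inter> (\<Union>C\<in>F. X C)) = (\<Sum>C\<in>F. card (S \<inter> X C))" by simp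
  have "(\<Union>C\<in>F. X C) - S \<inter> (\<Union>C\<in>F. X C) = (\<Union>C\<in>F. X C - S \<inter> X C)" by auto
  moreover have "card (\<Union>C\<in>F. X C - S \<inter> X C) = (\<Sum>C\<in>F. card (X C - S \<inter> X C))"
    by (rule card_UN_disj_fam[OF fin]) (use fX dj in auto)
  ultimately have 3: "card ((\<Union>C\<in>F. X C) - S \<inter> (\<Union>C\<in>F. X C)) = (\<Sum>C\<in>F. card (X C - S \<inter> X C))" by simp
  show ?thesis unfolding 1 2 3 power_sum prod.distrib ..
qed


locale geo = setup0 +
  fixes x0 :: "real^'d::finite" and r :: real and L :: "(real^'d) set" and w w' :: "'d ccfg" and om :: "(real^'d) set"
  assumes r_pos: "r > 0" and Lb: "bounded L" and BL: "ball x0 r \<subseteq> L" and w_cf: "w \<in> ccfgs" and w'_cf: "w' \<in> ccfgs"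
    and fin_om: "finite om" and om_B: "om \<subseteq> ball x0 r"
begin

definition "B = ball x0 r"
definition "eta' = cat (restr w (L - B)) (restr w' (- L))"
definition "E' = grey (restr eta' (- B))"
definition "Z0 = grey w \<inter> (L - B)"
definition "Y = grey w' \<inter> - L"
definition "Z = om \<union> Z0"
definition "V' = om \<union> E'"
definition "CLs = CL a B eta' om"
definition "Far = {D \<in> clusters a Z. D \<inter> nbhd a (- L) = {} \<and> \<not> D \<subseteq> - nbhd a B}"
definition "dd = setdist B (- L)"
definition "kap = exp (3 * gm) * exp (- gm * dd / (2 * a))"
definition "Pn = nat \<lfloor>((r + 3 * a) / a) ^ DIM(real^'d)\<rfloor>"
definition "R = om - \<Union>Far"
definition "Com S = (\<Prod>D\<in>Far. uC lp lm t B w S D) * (al ^ card R * piP t R (S \<inter> R))"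

lemma BL': "B \<subseteq> L" using BL by (simp add: B_def)
lemma om_B': "om \<subseteq> B" using om_B by (simp add: B_def)

lemma E'_eq: "E' = Z0 \<union> Y"
proof -
  have "E' = grey w \<inter> ((L - B) \<inter> - B) \<union> grey w' \<inter> (- L \<inter> - B)"
    unfolding E'_def eta'_def restr_cat restr_restr grey_cat grey_restr by auto
  also have "\<dots> = Z0 \<union> Y" using BL' by (auto simp: Z0_def Y_def)
  finally show ?thesis .
qed

lemma E'_B: "E' \<inter> B = {}" unfolding E'_def grey_restr by auto
lemma V'_eq: "V' = Z \<union> Y" by (auto simp: V'_def Z_def E'_eq)
lemma Y_L: "Y \<subseteq> - L" by (auto simp: Y_def)
lemma Z_sub: "Z \<subseteq> V'" by (auto simp: V'_eq)
lemma V'_B: "V' \<inter> B = om" using om_B' E'_B by (auto simp: V'_def)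
lemma CLs_eq: "CLs = {C \<in> clusters a V'. \<not> C \<subseteq> - nbhd a B}"
  by (simp add: CLs_def CL_def V'_def E'_def)

lemma nbhd_B: "nbhd a B \<subseteq> ball x0 (r + 2 * a)"
proof
  fix z assume "z \<in> nbhd a B"
  then obtain b where b: "b \<in> B" "dist z b < 2 * a" by (auto simp: nbhd_def)
  then have "dist x0 b < r" by (simp add: B_def)
  then show "z \<in> ball x0 (r + 2 * a)" using b dist_triangle[of x0 z b] by (simp add: dist_commute)
qed

lemma locfin_cf: "u \<in> ccfgs \<Longrightarrow> bounded K \<Longrightarrow> finite (grey u \<inter> K)"
  by (auto simp: ccfgs_def locfin_def)

lemma fin_V'_nb: "finite (V' \<inter> nbhd a B)"
proof -
  have "V' \<inter> nbhd a B \<subseteq> om \<union> (grey w \<inter> ball x0 (r + 2 * a)) \<union> (grey w' \<inter> ball x0 (r + 2 * a))"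
    using nbhd_B by (auto simp: V'_eq Z_def Z0_def Y_def)
  moreover have "finite (om \<union> (grey w \<inter> ball x0 (r + 2 * a)) \<union> (grey w' \<inter> ball x0 (r + 2 * a)))"
    using fin_om locfin_cf[OF w_cf] locfin_cf[OF w'_cf] by auto
  ultimately show ?thesis by (rule finite_subset)
qed

lemma CLs_sub: "CLs \<subseteq> (cluster a V') ` (V' \<inter> nbhd a B)"
proof
  fix C assume C: "C \<in> CLs"
  then have Cc: "C \<in> clusters a V'" and "\<not> C \<subseteq> - nbhd a B" by (auto simp: CLs_eq)
  then obtain z where z: "z \<in> C" "z \<in> nbhd a B" by auto
  have "z \<in> V'" using clusters_sub[OF Cc] z by auto
  moreover have "C = cluster a V' z" by (rule clusters_eq[OF Cc z(1)])
  ultimately show "C \<in> (cluster a V') ` (V' \<inter> nbhd a B)" using z by auto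
qed

lemma fin_CLs: "finite CLs"
  using CLs_sub fin_V'_nb finite_subset by blast

lemma card_CLs: "card CLs \<le> card (V' \<inter> nbhd a B)"
  using card_mono[OF finite_imageI[OF fin_V'_nb] CLs_sub] card_image_le[OF fin_V'_nb, of "cluster a V'"] by linarith

lemma CLs_cov: "(\<Union>C\<in>CLs. C \<inter> B) = om"
proof
  show "(\<Union>C\<in>CLs. C \<inter> B) \<subseteq> om"
    using V'_B by (auto simp: CLs_eq dest!: clusters_sub)
  show "om \<subseteq> (\<Union>C\<in>CLs. C \<inter> B)"
  proof
    fix z assume z: "z \<in> om"
    then have zV: "z \<in> V'" by (simp add: V'_def)
    have zB: "z \<in> B" using z om_B' by auto
    have "z \<in> nbhd a B" using zB a_pos unfolding nbhd_def by (intro CollectI bexI[of _ z]) auto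
    then have "cluster a V' z \<in> CLs" using cluster_in_clusters[OF zV] cluster_refl[of z a V']
      by (auto simp: CLs_eq)
    then show "z \<in> (\<Union>C\<in>CLs. C \<inter> B)" using cluster_refl[of z a V'] zB by blast
  qed
qed

lemma CLs_disj: "\<forall>C\<in>CLs. \<forall>D\<in>CLs. C \<noteq> D \<longrightarrow> C \<inter> D = {}"
  using clusters_disj by (fastforce simp: CLs_eq)

lemma CLs_disjB: "\<forall>C\<in>CLs. \<forall>D\<in>CLs. C \<noteq> D \<longrightarrow> (C \<inter> B) \<inter> (D \<inter> B) = {}"
  using CLs_disj by blast

lemma CLs_finB: "C \<in> CLs \<Longrightarrow> finite (C \<inter> B)"
  using CLs_cov fin_om by (metis UN_upper finite_subset)

lemma KL:
  assumes z: "z \<in> Z" and far: "cluster a Z z \<inter> nbhd a (- L) = {}"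
  shows "cluster a V' z = cluster a Z z"
proof
  show "cluster a Z z \<subseteq> cluster a V' z" by (rule cluster_mono[OF Z_sub])
  show "cluster a V' z \<subseteq> cluster a Z z"
  proof (rule cluster_closed_sub)
    show "z \<in> cluster a Z z" by (rule cluster_refl)
    fix y y' assume y: "y \<in> cluster a Z z" and yy: "(y, y') \<in> linked a V'"
    have yZ: "y \<in> Z" using y cluster_sub[OF z] by auto
    have y'V: "y' \<in> V'" and dy: "dist y y' < 2 * a" using linked_mem[OF yy] by auto
    have "y' \<notin> Y"
    proof
      assume "y' \<in> Y"
      then have "y \<in> nbhd a (- L)" using Y_L dy by (auto simp: nbhd_def)
      then show False using far y by auto
    qed
    then have "y' \<in> Z" using y'V by (auto simp: V'_eq)
    then have "(y, y') \<in> linked a Z" using yZ dy by (auto simp: linked_def)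
    then show "y' \<in> cluster a Z z" using cluster_step[OF y] by blast
  qed
qed

lemma Far_sub: "Far \<subseteq> CLs"
proof
  fix D assume D: "D \<in> Far"
  then obtain z where z: "z \<in> Z" "D = cluster a Z z" by (auto simp: Far_def clusters_def)
  have "D = cluster a V' z" using KL[OF z(1)] D z(2) by (auto simp: Far_def)
  moreover have "z \<in> V'" using z Z_sub by auto
  ultimately show "D \<in> CLs" using D cluster_in_clusters by (auto simp: CLs_eq Far_def)
qed

lemma rest_near:
  assumes C: "C \<in> CLs - Far"
  shows "\<exists>p\<in>C. p \<in> nbhd a (- L)"
proof (rule ccontr)
  assume nn: "\<not> ?thesis"
  have Cc: "C \<in> clusters a V'" and Cn: "\<not> C \<subseteq> - nbhd a B" using C by (auto simp: CLs_eq)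
  then obtain v where v: "v \<in> V'" "C = cluster a V' v" by (auto simp: clusters_def)
  have CV: "C \<subseteq> V'" using clusters_sub[OF Cc] .
  have "C \<inter> Y = {}"
  proof (rule ccontr)
    assume "C \<inter> Y \<noteq> {}"
    then obtain y where "y \<in> C" "y \<in> Y" by auto
    then have "y \<in> nbhd a (- L)" using Y_L a_pos unfolding nbhd_def by (intro CollectI bexI[of _ y]) auto
    then show False using nn \<open>y \<in> C\<close> by auto
  qed
  then have vZ: "v \<in> Z" using v cluster_refl[of v a V'] by (auto simp: V'_eq)
  have sub: "cluster a Z v \<subseteq> C" using cluster_mono[OF Z_sub] v by auto
  then have far: "cluster a Z v \<inter> nbhd a (- L) = {}" using nn by auto
  have "C = cluster a Z v" using KL[OF vZ far] v by simp
  then have "C \<in> Far" using far Cn cluster_in_clusters[OF vZ] by (auto simp: Far_def)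
  then show False using C by auto
qed

lemma dd_le: "y \<in> - L \<Longrightarrow> dd \<le> infdist y B"
proof -
  assume y: "y \<in> - L"
  have "dd = setdist (- L) B" by (simp add: dd_def setdist_sym)
  also have "\<dots> \<le> setdist {y} B" by (rule setdist_le_sing[OF y])
  also have "\<dots> = infdist y B" by (simp add: infdist_eq_setdist)
  finally show ?thesis .
qed

lemma grey_eta'_C: "C \<in> CLs \<Longrightarrow> grey (restr eta' (C - B)) = C - B"
proof -
  assume C: "C \<in> CLs"
  have "C \<subseteq> V'" using C clusters_sub by (auto simp: CLs_eq)
  then have "C - B \<subseteq> E'" by (auto simp: V'_def dest: subsetD[OF om_B'])
  moreover have "E' \<subseteq> grey eta'" by (auto simp: E'_def grey_restr)
  ultimately show ?thesis by (auto simp: grey_restr)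
qed

lemma rho_rest:
  assumes C: "C \<in> CLs - Far" and finC: "finite C"
  shows "rho lp lm t (restr eta' (C - B)) \<le> kap"
proof -
  have Cc: "C \<in> clusters a V'" and Cn: "\<not> C \<subseteq> - nbhd a B" using C by (auto simp: CLs_eq)
  obtain x1 where x1: "x1 \<in> C" "x1 \<in> nbhd a B" using Cn by auto
  then obtain b where b: "b \<in> B" "dist x1 b < 2 * a" by (auto simp: nbhd_def)
  have x1B: "infdist x1 B < 2 * a" using infdist_le[OF b(1), of x1] b by linarith
  obtain p where p: "p \<in> C" "p \<in> nbhd a (- L)" using rest_near[OF C] by auto
  then obtain y where y: "y \<in> - L" "dist p y < 2 * a" by (auto simp: nbhd_def)
  define N where "N = card (C - B)"
  have lay: "infdist p B < 2 * a * (real N + 2)" unfolding N_def by (rule layer[OF a_pos Cc finC x1(1) x1B p(1)])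
  have "dd \<le> infdist y B" by (rule dd_le[OF y(1)])
  also have "\<dots> \<le> infdist p B + dist y p" by (rule infdist_triangle)
  finally have "dd < 2 * a * (real N + 2) + 2 * a" using lay y(2) by (simp add: dist_commute)
  then have "dd / (2 * a) < real N + 3" using a_pos by (simp add: field_simps)
  then have "gm * (dd / (2 * a)) \<le> gm * (real N + 3)" using gm_pos by (intro mult_left_mono) auto
  then have ex: "- real N * gm \<le> 3 * gm + (- gm * dd / (2 * a))" by (simp add: algebra_simps)
  have "rho lp lm t (restr eta' (C - B)) \<le> exp (- real N * gm)"
    using rho_le_exp[of "restr eta' (C - B)"] grey_eta'_C[of C] C by (simp add: N_def)
  also have "\<dots> \<le> exp (3 * gm + (- gm * dd / (2 * a)))" using ex by simp
  also have "\<dots> = kap" unfolding kap_def exp_add[symmetric] by simp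
  finally show ?thesis .
qed

lemma card_rest: "card (CLs - Far) \<le> Pn"
proof -
  define zs where "zs C = (SOME z. z \<in> C \<and> z \<in> nbhd a B)" for C
  have zs: "zs C \<in> C \<and> zs C \<in> nbhd a B" if "C \<in> CLs" for C
  proof -
    have "\<exists>z. z \<in> C \<and> z \<in> nbhd a B" using that by (auto simp: CLs_eq)
    then show ?thesis unfolding zs_def by (rule someI_ex)
  qed
  have inj: "inj_on zs (CLs - Far)"
  proof (rule inj_onI)
    fix C D assume "C \<in> CLs - Far" "D \<in> CLs - Far" "zs C = zs D"
    then show "C = D" using zs CLs_disj by (metis DiffD1 disjoint_iff)
  qed
  have fin: "finite (zs ` (CLs - Far))" using fin_CLs by simp
  have sub: "zs ` (CLs - Far) \<subseteq> ball x0 (r + 2 * a)" using zs nbhd_B by auto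
  have sep: "\<forall>p\<in>zs ` (CLs - Far). \<forall>q\<in>zs ` (CLs - Far). p \<noteq> q \<longrightarrow> dist p q \<ge> 2 * a"
  proof (intro ballI impI)
    fix p q assume p: "p \<in> zs ` (CLs - Far)" and q: "q \<in> zs ` (CLs - Far)" and pq: "p \<noteq> q"
    obtain C D where C: "C \<in> CLs - Far" "p = zs C" and D: "D \<in> CLs - Far" "q = zs D" using p q by auto
    have "C \<noteq> D" using pq C D by auto
    moreover have "C \<in> clusters a V'" "D \<in> clusters a V'" using C D by (auto simp: CLs_eq)
    ultimately show "dist p q \<ge> 2 * a" using clusters_far zs C D by blast
  qed
  have "real (card (zs ` (CLs - Far))) \<le> ((r + 2 * a + a) / a) ^ DIM(real^'d)"
    by (rule packing[OF fin sub a_pos _ sep]) (use r_pos a_pos in simp)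
  then have "real (card (CLs - Far)) \<le> ((r + 3 * a) / a) ^ DIM(real^'d)"
    using card_image[OF inj] by (simp add: algebra_simps)
  then show ?thesis unfolding Pn_def by (simp add: le_nat_floor)
qed

lemma Far_uC:
  assumes D: "D \<in> Far" shows "uC lp lm t B eta' S D = uC lp lm t B w S D"
proof -
  have "D \<subseteq> Z" using D clusters_sub by (auto simp: Far_def)
  then have "D - B \<subseteq> L - B" using om_B' by (auto simp: Z_def Z0_def)
  then have "restr eta' (D - B) = restr w (D - B)"
    unfolding eta'_def restr_def cat_def by auto
  then show ?thesis by (simp add: uC_def)
qed

lemma rest_union: "(\<Union>C\<in>CLs - Far. C \<inter> B) = R"
proof -
  have "(\<Union>C\<in>CLs - Far. C \<inter> B) = (\<Union>C\<in>CLs. C \<inter> B) - (\<Union>D\<in>Far. D)"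
  proof
    show "(\<Union>C\<in>CLs - Far. C \<inter> B) \<subseteq> (\<Union>C\<in>CLs. C \<inter> B) - (\<Union>D\<in>Far. D)"
    proof
      fix z assume "z \<in> (\<Union>C\<in>CLs - Far. C \<inter> B)"
      then obtain C where C: "C \<in> CLs" "C \<notin> Far" "z \<in> C" "z \<in> B" by auto
      have "z \<notin> D" if D: "D \<in> Far" for D
      proof
        assume "z \<in> D"
        moreover have "D \<in> CLs" using D Far_sub by auto
        ultimately have "C = D" using CLs_disj C by blast
        then show False using C D by simp
      qed
      then show "z \<in> (\<Union>C\<in>CLs. C \<inter> B) - (\<Union>D\<in>Far. D)" using C by auto
    qed
    show "(\<Union>C\<in>CLs. C \<inter> B) - (\<Union>D\<in>Far. D) \<subseteq> (\<Union>C\<in>CLs - Far. C \<inter> B)" by blast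
  qed
  then show ?thesis unfolding CLs_cov R_def by simp
qed

end


context geo
begin

lemma kap_nonneg: "kap \<ge> 0" by (simp add: kap_def)

lemma U_eq: "Wt a lp lm t B eta' om * nuinf a lp lm t B eta' om S = (\<Prod>C\<in>CLs. uC lp lm t B eta' S C)"
  using Wnu[OF fin_CLs[unfolded CLs_def]] by (simp add: CLs_def)

lemma nu_sum1: "(\<Sum>S\<in>Pow om. nuinf a lp lm t B eta' om S) = 1"
  using nu_sum[OF fin_CLs[unfolded CLs_def] fin_om CLs_cov[unfolded CLs_def]] CLs_disj by (simp add: CLs_def)

lemma U_bounds:
  assumes S: "S \<subseteq> om"
  shows "Com S \<le> (\<Prod>C\<in>CLs. uC lp lm t B eta' S C) \<and> (\<Prod>C\<in>CLs. uC lp lm t B eta' S C) \<le> (1 + kap) ^ Pn * Com S"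
proof -
  define F where "F = CLs - Far"
  define low where "low C = al ^ card (C \<inter> B) * piP t (C \<inter> B) (S \<inter> (C \<inter> B))" for C
  have finF: "finite F" using fin_CLs by (simp add: F_def)
  have split: "(\<Prod>C\<in>CLs. uC lp lm t B eta' S C) = (\<Prod>C\<in>F. uC lp lm t B eta' S C) * (\<Prod>C\<in>Far. uC lp lm t B eta' S C)"
    unfolding F_def by (rule prod.subset_diff[OF Far_sub fin_CLs])
  have PF: "(\<Prod>C\<in>Far. uC lp lm t B eta' S C) = (\<Prod>D\<in>Far. uC lp lm t B w S D)"
    using Far_uC by (rule prod.cong[OF refl])
  have PF0: "(\<Prod>D\<in>Far. uC lp lm t B w S D) \<ge> 0" by (rule prod_nonneg) (rule uC_nonneg)
  have lowb: "0 \<le> low C \<and> low C \<le> uC lp lm t B eta' S C \<and> uC lp lm t B eta' S C \<le> (1 + kap) * low C"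
    if C: "C \<in> F" for C
  proof -
    have l0: "0 \<le> low C" unfolding low_def using piP_nonneg al_gt1 by (intro mult_nonneg_nonneg) auto
    show ?thesis
    proof (cases "finite C")
      case True
      have "rho lp lm t (restr eta' (C - B)) \<le> kap" using rho_rest[OF _ True] C by (simp add: F_def)
      then show ?thesis using uC_bounds[of C B eta' kap S] CLs_finB[of C] C l0 by (auto simp: F_def low_def)
    next
      case False
      then have "uC lp lm t B eta' S C = low C" by (simp add: uC_def low_def al_def)
      then show ?thesis using l0 kap_nonneg by (simp add: mult_le_cancel_right1 algebra_simps)
    qed
  qed
  have Plow: "(\<Prod>C\<in>F. low C) = al ^ card R * piP t R (S \<inter> R)"
  proof -
    have "(\<Prod>C\<in>F. low C) = (\<Prod>C\<in>F. al ^ card (C \<inter> B) * (ptr t True True ^ card (S \<inter> (C \<inter> B)) * ptr t True False ^ card ((C \<inter> B) - S \<inter> (C \<inter> B))))"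
      by (simp add: low_def piP_def)
    also have "\<dots> = al ^ card (\<Union>C\<in>F. C \<inter> B) * (ptr t True True ^ card (S \<inter> (\<Union>C\<in>F. C \<inter> B)) * ptr t True False ^ card ((\<Union>C\<in>F. C \<inter> B) - S \<inter> (\<Union>C\<in>F. C \<inter> B)))"
      by (rule prod_low[OF finF]) (use CLs_finB CLs_disjB in \<open>auto simp: F_def\<close>)
    also have "(\<Union>C\<in>F. C \<inter> B) = R" using rest_union by (simp add: F_def)
    finally show ?thesis by (simp add: piP_def)
  qed
  have lo: "(\<Prod>C\<in>F. low C) \<le> (\<Prod>C\<in>F. uC lp lm t B eta' S C)"
    using lowb by (intro prod_mono) auto
  have "(\<Prod>C\<in>F. uC lp lm t B eta' S C) \<le> (\<Prod>C\<in>F. (1 + kap) * low C)"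
    using lowb by (intro prod_mono conjI uC_nonneg) auto
  also have "\<dots> = (1 + kap) ^ card F * (\<Prod>C\<in>F. low C)" by (simp add: prod.distrib)
  also have "\<dots> \<le> (1 + kap) ^ Pn * (\<Prod>C\<in>F. low C)"
  proof (rule mult_right_mono)
    show "(1 + kap) ^ card F \<le> (1 + kap) ^ Pn" using card_rest kap_nonneg by (intro power_increasing) (auto simp: F_def)
    show "0 \<le> (\<Prod>C\<in>F. low C)" using lowb by (simp add: prod_nonneg)
  qed
  finally have hi: "(\<Prod>C\<in>F. uC lp lm t B eta' S C) \<le> (1 + kap) ^ Pn * (\<Prod>C\<in>F. low C)" .
  have "Com S = (\<Prod>C\<in>F. low C) * (\<Prod>D\<in>Far. uC lp lm t B w S D)" by (simp add: Com_def Plow mult.commute)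
  then show ?thesis unfolding split PF using mult_right_mono[OF lo PF0] mult_right_mono[OF hi PF0]
    by (simp add: mult.assoc)
qed

lemma Wt_pos: "Wt a lp lm t B eta' om > 0"
  unfolding Wt_def by (intro mult_pos_pos prod_pos ballI den_pos zero_less_power) (use lpm lm_pos in auto)

lemma card_V'nb: "card (V' \<inter> nbhd a B) = card om + card (E' \<inter> nbhd a B)"
proof -
  have om_nb: "om \<subseteq> nbhd a B"
  proof
    fix z assume "z \<in> om"
    then have "z \<in> B" using om_B' by auto
    then show "z \<in> nbhd a B" using a_pos unfolding nbhd_def by (intro CollectI bexI[of _ z]) auto
  qed
  have "V' \<inter> nbhd a B = om \<union> (E' \<inter> nbhd a B)" using om_nb by (auto simp: V'_def)
  moreover have "om \<inter> (E' \<inter> nbhd a B) = {}" using om_B' E'_B by auto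
  moreover have "finite (E' \<inter> nbhd a B)" using fin_V'_nb by (rule finite_subset[rotated]) (auto simp: V'_def)
  ultimately show ?thesis using fin_om by (simp add: card_Un_disjoint)
qed

lemma Wt_le: "Wt a lp lm t B eta' om \<le> 2 ^ card (E' \<inter> nbhd a B) * (2 * al) ^ card om"
proof -
  define g where "g C = 2 * al ^ card (C \<inter> B)" for C :: "(real^'d) set"
  have fin: "finite (CL a B eta' om)" using fin_CLs by (simp add: CLs_def)
  have "Wt a lp lm t B eta' om \<le> (\<Prod>C\<in>{C \<in> CL a B eta' om. finite C}. g C) * (\<Prod>C\<in>{C \<in> CL a B eta' om. infinite C}. g C)"
    unfolding Wt_def al_def[symmetric]
  proof (rule mult_mono)
    show "(\<Prod>C\<in>{C \<in> CL a B eta' om. finite C}. al ^ card (C \<inter> B) + rho lp lm t (restr eta' (C - B))) \<le> (\<Prod>C\<in>{C \<in> CL a B eta' om. finite C}. g C)"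
    proof (rule prod_mono)
      fix C
      have "rho lp lm t (restr eta' (C - B)) \<le> 1" by (rule rho_le1)
      moreover have "1 \<le> al ^ card (C \<inter> B)" using al_gt1 by simp
      moreover have "0 \<le> rho lp lm t (restr eta' (C - B))" using rho_pos less_imp_le by blast
      ultimately show "0 \<le> al ^ card (C \<inter> B) + rho lp lm t (restr eta' (C - B)) \<and> al ^ card (C \<inter> B) + rho lp lm t (restr eta' (C - B)) \<le> g C"
        by (simp add: g_def)
    qed
    show "(\<Prod>C\<in>{C \<in> CL a B eta' om. infinite C}. al ^ card (C \<inter> B)) \<le> (\<Prod>C\<in>{C \<in> CL a B eta' om. infinite C}. g C)"
      using al_gt1 by (intro prod_mono) (simp add: g_def)
    show "0 \<le> (\<Prod>C\<in>{C \<in> CL a B eta' om. infinite C}. al ^ card (C \<inter> B))" using al_gt1 by (simp add: prod_nonneg)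
    show "0 \<le> (\<Prod>C\<in>{C \<in> CL a B eta' om. finite C}. g C)" using al_gt1 by (simp add: prod_nonneg g_def)
  qed
  also have "\<dots> = (\<Prod>C\<in>CLs. g C)" unfolding CLs_def by (rule prod_split_fin[OF fin, symmetric])
  also have "\<dots> = 2 ^ card CLs * al ^ (\<Sum>C\<in>CLs. card (C \<inter> B))" by (simp add: g_def prod.distrib power_sum)
  also have "(\<Sum>C\<in>CLs. card (C \<inter> B)) = card om"
    using card_UN_disj_fam[OF fin_CLs, of "\<lambda>C. C \<inter> B"] CLs_finB CLs_disjB CLs_cov by simp
  also have "2 ^ card CLs * al ^ card om \<le> 2 ^ card (V' \<inter> nbhd a B) * al ^ card om"
    using card_CLs al_gt1 by (intro mult_right_mono power_increasing) auto
  also have "\<dots> = 2 ^ card (E' \<inter> nbhd a B) * (2 * al) ^ card om"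
    by (simp add: card_V'nb power_add power_mult_distrib)
  finally show ?thesis .
qed

end


locale isoc =
  fixes a :: real and B :: "(real^'d::finite) set" and eta :: "'d ccfg" and h :: "real^'d \<Rightarrow> real^'d"
    and om om' :: "(real^'d) set"
  assumes bij: "bij_betw h (om \<union> grey (restr eta (- B))) (om' \<union> grey (restr eta (- B)))"
    and fixE: "\<forall>e\<in>grey (restr eta (- B)). h e = e"
    and omB: "om \<subseteq> B" and om'B: "om' \<subseteq> B" and hom: "h ` om = om'"
    and lk: "\<forall>u\<in>om \<union> grey (restr eta (- B)). \<forall>v\<in>om \<union> grey (restr eta (- B)). dist (h u) (h v) < 2 * a \<longleftrightarrow> dist u v < 2 * a"
begin

abbreviation "E \<equiv> grey (restr eta (- B))"
abbreviation "V \<equiv> om \<union> E"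
abbreviation "V' \<equiv> om' \<union> E"

lemma E_B: "E \<inter> B = {}" by (auto simp: grey_def restr_def)

lemma inj: "inj_on h V" using bij by (simp add: bij_betw_def)

lemma hB: "z \<in> V \<Longrightarrow> h z \<in> B \<longleftrightarrow> z \<in> B"
  using hom omB om'B fixE E_B by auto

lemma h_out: "z \<in> V \<Longrightarrow> z \<notin> B \<Longrightarrow> h z = z"
  using omB fixE by auto

lemma hnb: "z \<in> V \<Longrightarrow> h z \<in> nbhd a B \<longleftrightarrow> z \<in> nbhd a B"
proof -
  assume z: "z \<in> V"
  show ?thesis
  proof (cases "z \<in> B")
    case True
    then have "h z \<in> B" using hB z by simp
    have nb: "y \<in> B \<Longrightarrow> y \<in> nbhd a B \<longleftrightarrow> 0 < a" for y
      unfolding nbhd_def by (auto intro!: bexI[of _ y] simp: dist_commute) (smt (verit) zero_le_dist)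
    then show ?thesis using True \<open>h z \<in> B\<close> by simp
  next
    case False then show ?thesis using h_out z by simp
  qed
qed

lemma CL_iso: "CL a B eta om' = (\<lambda>C. h ` C) ` CL a B eta om"
proof -
  have cl: "clusters a V' = (\<lambda>C. h ` C) ` clusters a V"
    by (rule clusters_iso[OF bij]) (use lk in auto)
  have nb: "C \<in> clusters a V \<Longrightarrow> (h ` C \<subseteq> - nbhd a B) \<longleftrightarrow> (C \<subseteq> - nbhd a B)" for C
    using clusters_sub[of C a V] hnb by blast
  show ?thesis unfolding CL_def cl using nb by auto
qed

lemma inj_img: "inj_on (\<lambda>C. h ` C) (CL a B eta om)"
proof (rule inj_onI)
  fix C D assume C: "C \<in> CL a B eta om" and D: "D \<in> CL a B eta om" and eq: "h ` C = h ` D"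
  have "C \<subseteq> V" "D \<subseteq> V" using C D clusters_sub by (auto simp: CL_def)
  then show "C = D" using eq inj by (simp add: inj_on_image_eq_iff)
qed

lemma img_facts:
  assumes C: "C \<subseteq> V" and S: "S \<subseteq> om"
  shows "card (h ` C \<inter> B) = card (C \<inter> B)" "h ` C - B = C - B" "finite (h ` C) \<longleftrightarrow> finite C"
    "card (h ` S \<inter> (h ` C \<inter> B)) = card (S \<inter> (C \<inter> B))" "card ((h ` C \<inter> B) - h ` S) = card ((C \<inter> B) - S)"
proof -
  have injC: "inj_on h C" using inj C by (rule inj_on_subset)
  have e1: "h ` C \<inter> B = h ` (C \<inter> B)" using C hB by auto
  show "card (h ` C \<inter> B) = card (C \<inter> B)" unfolding e1 using injC by (simp add: card_image inj_on_subset)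
  show "h ` C - B = C - B"
  proof
    show "h ` C - B \<subseteq> C - B" using C hB h_out by force
    show "C - B \<subseteq> h ` C - B" using C h_out by (force simp: image_iff)
  qed
  show "finite (h ` C) \<longleftrightarrow> finite C" using injC finite_image_iff by blast
  have SV: "S \<union> C \<subseteq> V" using S C by auto
  have injSC: "inj_on h (S \<union> C)" using inj SV by (rule inj_on_subset)
  have e2: "h ` S \<inter> (h ` C \<inter> B) = h ` (S \<inter> (C \<inter> B))"
    using injSC e1 by (auto simp: inj_on_def)
  show "card (h ` S \<inter> (h ` C \<inter> B)) = card (S \<inter> (C \<inter> B))" unfolding e2
    using injSC by (intro card_image) (auto intro: inj_on_subset)
  have e3: "(h ` C \<inter> B) - h ` S = h ` ((C \<inter> B) - S)"
    using injSC e1 by (auto simp: inj_on_def)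
  show "card ((h ` C \<inter> B) - h ` S) = card ((C \<inter> B) - S)" unfolding e3
    using injSC by (intro card_image) (auto intro: inj_on_subset)
qed

lemma CLsub: "C \<in> CL a B eta om \<Longrightarrow> C \<subseteq> V"
  using clusters_sub by (auto simp: CL_def)

lemma Wt_iso: "Wt a lp lm t B eta om' = Wt a lp lm t B eta om"
proof -
  have f1: "{C \<in> CL a B eta om'. finite C} = (\<lambda>C. h ` C) ` {C \<in> CL a B eta om. finite C}"
    using img_facts(3)[OF CLsub] by (auto simp: CL_iso)
  have f2: "{C \<in> CL a B eta om'. infinite C} = (\<lambda>C. h ` C) ` {C \<in> CL a B eta om. infinite C}"
    using img_facts(3)[OF CLsub] by (auto simp: CL_iso)
  have i1: "inj_on (\<lambda>C. h ` C) {C \<in> CL a B eta om. finite C}" using inj_img by (rule inj_on_subset) auto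
  have i2: "inj_on (\<lambda>C. h ` C) {C \<in> CL a B eta om. infinite C}" using inj_img by (rule inj_on_subset) auto
  show ?thesis unfolding Wt_def f1 f2 prod.reindex[OF i1] prod.reindex[OF i2] comp_def
    using img_facts[OF CLsub, of _ "{}"] by (intro arg_cong2[where f="(*)"] prod.cong refl) auto
qed

lemma nuinf_iso: "S \<subseteq> om \<Longrightarrow> nuinf a lp lm t B eta om' (h ` S) = nuinf a lp lm t B eta om S"
proof -
  assume S: "S \<subseteq> om"
  have f1: "{C \<in> CL a B eta om'. finite C} = (\<lambda>C. h ` C) ` {C \<in> CL a B eta om. finite C}"
    using img_facts(3)[OF CLsub] by (auto simp: CL_iso)
  have f2: "{C \<in> CL a B eta om'. infinite C} = (\<lambda>C. h ` C) ` {C \<in> CL a B eta om. infinite C}"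
    using img_facts(3)[OF CLsub] by (auto simp: CL_iso)
  have i1: "inj_on (\<lambda>C. h ` C) {C \<in> CL a B eta om. finite C}" using inj_img by (rule inj_on_subset) auto
  have i2: "inj_on (\<lambda>C. h ` C) {C \<in> CL a B eta om. infinite C}" using inj_img by (rule inj_on_subset) auto
  show ?thesis unfolding nuinf_def f1 f2 prod.reindex[OF i1] prod.reindex[OF i2] comp_def
    using img_facts[OF CLsub S] by (intro arg_cong2[where f="(*)"] prod.cong refl) auto
qed

end


lemma pattern_measurable:
  fixes G :: "'a \<Rightarrow> real" and A :: "'j \<Rightarrow> 'a set"
  assumes finJ: "finite J" and AJ: "\<forall>j\<in>J. A j \<in> sets M"
    and inv: "\<And>x y. x \<in> space M \<Longrightarrow> y \<in> space M \<Longrightarrow> (\<forall>j\<in>J. x \<in> A j \<longleftrightarrow> y \<in> A j) \<Longrightarrow> G x = G y"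
  shows "G \<in> borel_measurable M"
proof -
  define sg where "sg x = {j \<in> J. x \<in> A j}" for x
  have sgm: "sg \<in> measurable M (count_space (Pow J))"
  proof (subst measurable_count_space_eq2)
    show "finite (Pow J)" using finJ by simp
    show "sg \<in> space M \<rightarrow> Pow J \<and> (\<forall>P\<in>Pow J. sg -` {P} \<inter> space M \<in> sets M)"
    proof (intro conjI ballI)
      show "sg \<in> space M \<rightarrow> Pow J" by (auto simp: sg_def)
      fix P assume P: "P \<in> Pow J"
      have pj: "Measurable.pred M (\<lambda>x. (x \<in> A j) = (j \<in> P))" if j: "j \<in> J" for j
      proof (cases "j \<in> P")
        case True
        have e: "{x \<in> space M. (x \<in> A j) = (j \<in> P)} = A j" using True AJ j sets.sets_into_space by auto
        show ?thesis unfolding Measurable.pred_def e using AJ j by blast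
      next
        case False
        have e: "{x \<in> space M. (x \<in> A j) = (j \<in> P)} = space M - A j" using False by auto
        show ?thesis unfolding Measurable.pred_def e using AJ j by (intro sets.compl_sets) blast
      qed
      have "Measurable.pred M (\<lambda>x. \<forall>j\<in>J. (x \<in> A j) = (j \<in> P))"
        by (rule pred_intros_finite(3)[OF finJ pj])
      then have "{x \<in> space M. \<forall>j\<in>J. (x \<in> A j) = (j \<in> P)} \<in> sets M" by (rule predE)
      moreover have "sg -` {P} \<inter> space M = {x \<in> space M. \<forall>j\<in>J. (x \<in> A j) = (j \<in> P)}"
      proof -
        have "sg x = P \<longleftrightarrow> (\<forall>j\<in>J. (x \<in> A j) = (j \<in> P))" for x
        proof
          assume "sg x = P" then show "\<forall>j\<in>J. (x \<in> A j) = (j \<in> P)" unfolding sg_def by blast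
        next
          assume h: "\<forall>j\<in>J. (x \<in> A j) = (j \<in> P)"
          show "sg x = P" unfolding sg_def using h P by blast
        qed
        then show ?thesis by blast
      qed
      ultimately show "sg -` {P} \<inter> space M \<in> sets M" by simp
    qed
  qed
  define g where "g P = (if \<exists>x\<in>space M. sg x = P then G (SOME x. x \<in> space M \<and> sg x = P) else 0)" for P
  have eq: "G x = g (sg x)" if x: "x \<in> space M" for x
  proof -
    have ex: "\<exists>x'. x' \<in> space M \<and> sg x' = sg x" using x by blast
    define x' where "x' = (SOME x'. x' \<in> space M \<and> sg x' = sg x)"
    have x': "x' \<in> space M \<and> sg x' = sg x" unfolding x'_def by (rule someI_ex[OF ex])
    have "G x' = G x" using inv[of x' x] x' x by (auto simp: sg_def set_eq_iff)
    then show ?thesis using x by (auto simp: g_def x'_def[symmetric])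
  qed
  have "(\<lambda>x. g (sg x)) \<in> borel_measurable M"
    by (rule measurable_compose[OF sgm]) simp
  then show ?thesis by (subst measurable_cong[where g="\<lambda>x. g (sg x)"]) (use eq in auto)
qed

context
  fixes a :: real and B :: "(real^'d::finite) set" and eta :: "'d ccfg" and n :: nat
  assumes a_pos: "a > 0"
begin

definition "EE = grey (restr eta (- B))"
definition "E0 = EE \<inter> nbhd a B"

lemma pat_iso:
  assumes xB: "\<forall>i<n. x i \<in> B" and yB: "\<forall>i<n. y i \<in> B"
    and pa: "\<forall>i<n. \<forall>j<n. x i = x j \<longleftrightarrow> y i = y j"
    and pb: "\<forall>i<n. \<forall>j<n. dist (x i) (x j) < 2 * a \<longleftrightarrow> dist (y i) (y j) < 2 * a"
    and pc: "\<forall>i<n. \<forall>e\<in>E0. dist (x i) e < 2 * a \<longleftrightarrow> dist (y i) e < 2 * a"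
  shows "Wt a lp lm t B eta (y ` {..<n}) = Wt a lp lm t B eta (x ` {..<n})"
    and "I \<subseteq> {..<n} \<Longrightarrow> nuinf a lp lm t B eta (y ` {..<n}) (y ` I) = nuinf a lp lm t B eta (x ` {..<n}) (x ` I)"
proof -
  define h where "h z = (if z \<in> x ` {..<n} then y (SOME i. i < n \<and> x i = z) else z)" for z
  have hx: "h (x i) = y i" if i: "i < n" for i
  proof -
    have ex: "\<exists>j. j < n \<and> x j = x i" using i by blast
    define j where "j = (SOME j. j < n \<and> x j = x i)"
    have j: "j < n \<and> x j = x i" unfolding j_def by (rule someI_ex[OF ex])
    then have "y j = y i" using pa i by blast
    then show ?thesis using i by (simp add: h_def j_def[symmetric])
  qed
  have EB: "EE \<inter> B = {}" by (auto simp: EE_def grey_def restr_def)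
  have xE: "x ` {..<n} \<inter> EE = {}" using xB EB by auto
  have yE: "y ` {..<n} \<inter> EE = {}" using yB EB by auto
  have hE: "h e = e" if "e \<in> EE" for e using that xE by (auto simp: h_def)
  have himg: "h ` (x ` J) = y ` J" if "J \<subseteq> {..<n}" for J
    using that hx by (auto simp: image_iff) (metis lessThan_iff subsetD)
  have nb: "z \<in> B \<Longrightarrow> dist z e < 2 * a \<Longrightarrow> e \<in> nbhd a B" for z e
    unfolding nbhd_def by (auto simp: dist_commute)
  have lk: "\<forall>u\<in>x ` {..<n} \<union> EE. \<forall>v\<in>x ` {..<n} \<union> EE. dist (h u) (h v) < 2 * a \<longleftrightarrow> dist u v < 2 * a"
  proof (intro ballI)
    fix u v assume u: "u \<in> x ` {..<n} \<union> EE" and v: "v \<in> x ` {..<n} \<union> EE"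
    have c1: "dist (h (x i)) e < 2 * a \<longleftrightarrow> dist (x i) e < 2 * a" if i: "i < n" and e: "e \<in> EE" for i e
    proof (cases "e \<in> nbhd a B")
      case True then show ?thesis using pc i e hx by (auto simp: E0_def)
    next
      case False
      then show ?thesis using nb[of "x i" e] nb[of "y i" e] xB yB i hx by auto
    qed
    show "dist (h u) (h v) < 2 * a \<longleftrightarrow> dist u v < 2 * a"
      using u v
    proof (elim UnE imageE)
      fix i j assume "u = x i" "i \<in> {..<n}" "v = x j" "j \<in> {..<n}"
      then show ?thesis using pb hx by auto
    next
      fix i assume "u = x i" "i \<in> {..<n}" "v \<in> EE"
      then show ?thesis using c1 hE by auto
    next
      fix j assume "u \<in> EE" "v = x j" "j \<in> {..<n}"
      then show ?thesis using c1 hE by (auto simp: dist_commute)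
    next
      assume "u \<in> EE" "v \<in> EE" then show ?thesis using hE by auto
    qed
  qed
  have inj: "inj_on h (x ` {..<n} \<union> EE)"
  proof (rule inj_onI)
    fix u v assume u: "u \<in> x ` {..<n} \<union> EE" and v: "v \<in> x ` {..<n} \<union> EE" and huv: "h u = h v"
    show "u = v" using u v
    proof (elim UnE imageE)
      fix i j assume "u = x i" "i \<in> {..<n}" "v = x j" "j \<in> {..<n}"
      then show ?thesis using pa hx huv by auto
    next
      fix i assume "u = x i" "i \<in> {..<n}" "v \<in> EE"
      then show ?thesis using hx hE huv yE by auto
    next
      fix j assume "u \<in> EE" "v = x j" "j \<in> {..<n}"
      then show ?thesis using hx hE huv yE by auto
    next
      assume "u \<in> EE" "v \<in> EE" then show ?thesis using hE huv by auto
    qed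
  qed
  have img: "h ` (x ` {..<n} \<union> EE) = y ` {..<n} \<union> EE"
    using himg[of "{..<n}"] hE by (auto simp: image_Un)
  interpret isoc a B eta h "x ` {..<n}" "y ` {..<n}"
  proof
    show "bij_betw h (x ` {..<n} \<union> grey (restr eta (- B))) (y ` {..<n} \<union> grey (restr eta (- B)))"
      using inj img by (simp add: bij_betw_def EE_def)
    show "\<forall>e\<in>grey (restr eta (- B)). h e = e" using hE by (simp add: EE_def)
    show "x ` {..<n} \<subseteq> B" "y ` {..<n} \<subseteq> B" using xB yB by auto
    show "h ` x ` {..<n} = y ` {..<n}" by (rule himg) simp
    show "\<forall>u\<in>x ` {..<n} \<union> grey (restr eta (- B)). \<forall>v\<in>x ` {..<n} \<union> grey (restr eta (- B)). (dist (h u) (h v) < 2 * a) = (dist u v < 2 * a)"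
      using lk by (simp add: EE_def)
  qed
  show "Wt a lp lm t B eta (y ` {..<n}) = Wt a lp lm t B eta (x ` {..<n})" by (rule Wt_iso)
  show "nuinf a lp lm t B eta (y ` {..<n}) (y ` I) = nuinf a lp lm t B eta (x ` {..<n}) (x ` I)" if "I \<subseteq> {..<n}"
  proof -
    have "x ` I \<subseteq> x ` {..<n}" using that by auto
    then show ?thesis using nuinf_iso[of "x ` I"] himg[OF that] by metis
  qed
qed

end


lemma id_meas_leb: "B \<in> sets lebesgue \<Longrightarrow> (\<lambda>x. x) \<in> borel_measurable (lebesgue_on (B :: (real^'d::finite) set))"
  apply (intro measurable_restrict_space1 measurable_completion)
  apply (subst measurable_lborel2) apply simp done

lemma comp_meas:
  assumes "B \<in> sets lebesgue" "i < n"
  shows "(\<lambda>x. x i) \<in> borel_measurable (Pi\<^sub>M {..<n} (\<lambda>_. lebesgue_on (B :: (real^'d::finite) set)))"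
proof -
  have "(\<lambda>x. x i) \<in> measurable (Pi\<^sub>M {..<n} (\<lambda>_. lebesgue_on B)) (lebesgue_on B)"
    using measurable_component_singleton[of i "{..<n}" "\<lambda>_. lebesgue_on B"] assms(2) by simp
  from measurable_compose[OF this id_meas_leb[OF assms(1)]] show ?thesis by simp
qed

lemma space_Mn: "x \<in> space (Pi\<^sub>M {..<n} (\<lambda>_. lebesgue_on B)) \<Longrightarrow> i < n \<Longrightarrow> x i \<in> B"
  by (auto simp: space_PiM PiE_def Pi_def)

lemma sum_Pow_image:
  fixes n :: nat
  shows "(\<Sum>S\<in>Pow (x ` {..<n}). g S) = (\<Sum>I\<in>Pow {..<n}. if (\<forall>i\<in>I. \<forall>j<n. x j = x i \<longrightarrow> j \<in> I) then g (x ` I) else 0)"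
proof -
  let ?Sat = "{I \<in> Pow {..<n}. \<forall>i\<in>I. \<forall>j<n. x j = x i \<longrightarrow> j \<in> I}"
  have bij: "bij_betw (\<lambda>I. x ` I) ?Sat (Pow (x ` {..<n}))"
  proof (rule bij_betwI')
    fix I I' assume I: "I \<in> ?Sat" and I': "I' \<in> ?Sat"
    show "(x ` I = x ` I') = (I = I')"
    proof
      assume eq: "x ` I = x ` I'"
      show "I = I'"
      proof (intro set_eqI iffI)
        fix i assume i: "i \<in> I"
        then obtain j where "j \<in> I'" "x i = x j" using eq by (metis image_eqI imageE)
        then show "i \<in> I'" using I' I i by auto
      next
        fix i assume i: "i \<in> I'"
        then obtain j where "j \<in> I" "x i = x j" using eq by (metis image_eqI imageE)
        then show "i \<in> I" using I' I i by auto
      qed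
    qed simp
  next
    fix I assume "I \<in> ?Sat" then show "x ` I \<in> Pow (x ` {..<n})" by auto
  next
    fix S assume S: "S \<in> Pow (x ` {..<n})"
    show "\<exists>I\<in>?Sat. S = x ` I"
      by (rule bexI[of _ "{i \<in> {..<n}. x i \<in> S}"]) (use S in auto)
  qed
  have "(\<Sum>S\<in>Pow (x ` {..<n}). g S) = (\<Sum>I\<in>?Sat. g (x ` I))"
    by (rule sum.reindex_bij_betw[OF bij, symmetric])
  also have "\<dots> = (\<Sum>I\<in>Pow {..<n}. if (\<forall>i\<in>I. \<forall>j<n. x j = x i \<longrightarrow> j \<in> I) then g (x ` I) else 0)"
    by (rule sum.inter_filter) simp
  finally show ?thesis .
qed

context
  fixes a :: real and B :: "(real^'d::finite) set" and eta :: "'d ccfg" and n :: nat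
  assumes a_pos: "a > 0" and Bm: "B \<in> sets lebesgue" and finE0: "finite (E0 a B eta)"
begin

abbreviation "Mn \<equiv> Pi\<^sub>M {..<n} (\<lambda>_. lebesgue_on B)"

definition "Jn = Inl ` ({..<n} \<times> {..<n} \<times> (UNIV :: bool set)) \<union> Inr ` ({..<n} \<times> E0 a B eta)"

fun Aset :: "(nat \<times> nat \<times> bool) + (nat \<times> (real^'d)) \<Rightarrow> (nat \<Rightarrow> real^'d) set" where
  "Aset (Inl (i, j, True)) = {x \<in> space Mn. dist (x i) (x j) = 0}"
| "Aset (Inl (i, j, False)) = {x \<in> space Mn. dist (x i) (x j) < 2 * a}"
| "Aset (Inr (i, e)) = {x \<in> space Mn. dist (x i) e < 2 * a}"

lemma Aset_sets: "\<forall>j\<in>Jn. Aset j \<in> sets Mn"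
proof
  fix k assume k: "k \<in> Jn"
  show "Aset k \<in> sets Mn"
  proof (cases k)
    case (Inl p)
    then obtain i j b where p: "k = Inl (i, j, b)" "i < n" "j < n" using k by (auto simp: Jn_def)
    have mi: "(\<lambda>x. dist (x i) (x j)) \<in> borel_measurable Mn"
      using comp_meas[OF Bm p(2)] comp_meas[OF Bm p(3)] by (rule borel_measurable_dist)
    have "(\<lambda>x. dist (x i) (x j)) -` {0} \<inter> space Mn \<in> sets Mn" by (rule measurable_sets[OF mi]) simp
    moreover have "(\<lambda>x. dist (x i) (x j)) -` {0} \<inter> space Mn = {x \<in> space Mn. dist (x i) (x j) = 0}" by auto
    ultimately show ?thesis using p mi by (cases b) simp_all
  next
    case (Inr p)
    then obtain i e where p: "k = Inr (i, e)" "i < n" using k by (auto simp: Jn_def)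
    have mi: "(\<lambda>x. dist (x i) e) \<in> borel_measurable Mn"
      using comp_meas[OF Bm p(2)] measurable_const[of e borel] by (intro borel_measurable_dist) auto
    show ?thesis using p mi by simp
  qed
qed

lemma finJn: "finite Jn" using finE0 by (simp add: Jn_def)

lemma pat:
  assumes x: "x \<in> space Mn" and y: "y \<in> space Mn" and same: "\<forall>j\<in>Jn. x \<in> Aset j \<longleftrightarrow> y \<in> Aset j"
  shows "\<forall>i<n. \<forall>j<n. x i = x j \<longleftrightarrow> y i = y j"
    "\<forall>i<n. \<forall>j<n. dist (x i) (x j) < 2 * a \<longleftrightarrow> dist (y i) (y j) < 2 * a"
    "\<forall>i<n. \<forall>e\<in>E0 a B eta. dist (x i) e < 2 * a \<longleftrightarrow> dist (y i) e < 2 * a"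
proof -
  show "\<forall>i<n. \<forall>j<n. x i = x j \<longleftrightarrow> y i = y j"
  proof (intro allI impI)
    fix i j assume "i < n" "j < n"
    then have "Inl (i, j, True) \<in> Jn" by (simp add: Jn_def)
    then show "x i = x j \<longleftrightarrow> y i = y j" using same x y by auto
  qed
  show "\<forall>i<n. \<forall>j<n. dist (x i) (x j) < 2 * a \<longleftrightarrow> dist (y i) (y j) < 2 * a"
  proof (intro allI impI)
    fix i j assume "i < n" "j < n"
    then have "Inl (i, j, False) \<in> Jn" by (simp add: Jn_def)
    then show "dist (x i) (x j) < 2 * a \<longleftrightarrow> dist (y i) (y j) < 2 * a" using same x y by auto
  qed
  show "\<forall>i<n. \<forall>e\<in>E0 a B eta. dist (x i) e < 2 * a \<longleftrightarrow> dist (y i) e < 2 * a"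
  proof (intro allI impI ballI)
    fix i e assume "i < n" "e \<in> E0 a B eta"
    then have "Inr (i, e) \<in> Jn" by (simp add: Jn_def)
    then show "dist (x i) e < 2 * a \<longleftrightarrow> dist (y i) e < 2 * a" using same x y by auto
  qed
qed

lemma meas_Wt: "(\<lambda>x. Wt a lp lm t B eta (x ` {..<n})) \<in> borel_measurable Mn"
proof (rule pattern_measurable[OF finJn Aset_sets])
  fix x y assume x: "x \<in> space Mn" and y: "y \<in> space Mn" and same: "\<forall>j\<in>Jn. (x \<in> Aset j) = (y \<in> Aset j)"
  have "Wt a lp lm t B eta (y ` {..<n}) = Wt a lp lm t B eta (x ` {..<n})"
    by (rule pat_iso(1)[OF a_pos _ _ pat[OF x y same]]) (use space_Mn x y in auto)
  then show "Wt a lp lm t B eta (x ` {..<n}) = Wt a lp lm t B eta (y ` {..<n})" by simp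
qed

lemma meas_UI:
  assumes I: "I \<subseteq> {..<n}"
  shows "(\<lambda>x. if (\<forall>i\<in>I. \<forall>j<n. x j = x i \<longrightarrow> j \<in> I)
     then Wt a lp lm t B eta (x ` {..<n}) * nuinf a lp lm t B eta (x ` {..<n}) (x ` I) else 0) \<in> borel_measurable Mn"
proof (rule pattern_measurable[OF finJn Aset_sets])
  fix x y assume x: "x \<in> space Mn" and y: "y \<in> space Mn" and same: "\<forall>j\<in>Jn. (x \<in> Aset j) = (y \<in> Aset j)"
  have xy: "\<forall>i\<in>{..<n}. x i \<in> B" "\<forall>i\<in>{..<n}. y i \<in> B" using space_Mn x y by auto
  have W: "Wt a lp lm t B eta (y ` {..<n}) = Wt a lp lm t B eta (x ` {..<n})"
    by (rule pat_iso(1)[OF a_pos _ _ pat[OF x y same]]) (use xy in auto)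
  have N: "nuinf a lp lm t B eta (y ` {..<n}) (y ` I) = nuinf a lp lm t B eta (x ` {..<n}) (x ` I)"
    by (rule pat_iso(2)[OF a_pos _ _ pat[OF x y same] I]) (use xy in auto)
  have S: "(\<forall>i\<in>I. \<forall>j<n. x j = x i \<longrightarrow> j \<in> I) \<longleftrightarrow> (\<forall>i\<in>I. \<forall>j<n. y j = y i \<longrightarrow> j \<in> I)"
    using pat(1)[OF x y same] I by blast
  show "(if (\<forall>i\<in>I. \<forall>j<n. x j = x i \<longrightarrow> j \<in> I) then Wt a lp lm t B eta (x ` {..<n}) * nuinf a lp lm t B eta (x ` {..<n}) (x ` I) else 0)
      = (if (\<forall>i\<in>I. \<forall>j<n. y j = y i \<longrightarrow> j \<in> I) then Wt a lp lm t B eta (y ` {..<n}) * nuinf a lp lm t B eta (y ` {..<n}) (y ` I) else 0)"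
    unfolding W N S by (rule refl)
qed

lemma meas_f:
  assumes f: "cfg_measurable f" and I: "I \<subseteq> {..<n}"
  shows "(\<lambda>x. f (x ` I, x ` ({..<n} - I))) \<in> borel_measurable Mn"
proof -
  have "\<forall>s. (\<lambda>x. f (x ` {i \<in> {..<n}. s i}, x ` {i \<in> {..<n}. \<not> s i})) \<in> borel_measurable (Pi\<^sub>M {..<n} (\<lambda>_. (lborel :: (real^'d) measure)))"
    using f unfolding cfg_measurable_def by blast
  from this[rule_format, of "\<lambda>i. i \<in> I"]
  have m: "(\<lambda>x. f (x ` {i \<in> {..<n}. i \<in> I}, x ` {i \<in> {..<n}. \<not> i \<in> I})) \<in> borel_measurable (Pi\<^sub>M {..<n} (\<lambda>_. lborel))" .
  have idm: "(\<lambda>x. x) \<in> measurable Mn (Pi\<^sub>M {..<n} (\<lambda>_. (lborel :: (real^'d) measure)))"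
  proof -
    have "(\<lambda>\<omega> i. \<omega> i) \<in> measurable Mn (Pi\<^sub>M {..<n} (\<lambda>_. (lborel :: (real^'d) measure)))"
    proof (rule measurable_PiM_single')
      fix i :: nat assume "i \<in> {..<n}"
      then show "(\<lambda>\<omega>. \<omega> i) \<in> Mn \<rightarrow>\<^sub>M lborel" using comp_meas[OF Bm] by (simp add: measurable_lborel1)
    next
      show "(\<lambda>\<omega> i. \<omega> i) \<in> space Mn \<rightarrow> (\<Pi>\<^sub>E i\<in>{..<n}. space lborel)"
        by (auto simp: space_PiM PiE_def Pi_def)
    qed
    then show ?thesis by simp
  qed
  have "{i \<in> {..<n}. i \<in> I} = I" "{i \<in> {..<n}. \<not> i \<in> I} = {..<n} - I" using I by auto
  then show ?thesis using measurable_comp[OF idm m] by (simp add: comp_def)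
qed

lemma finfW_eq:
  "finf a lp lm t B eta f (x ` {..<n}) * Wt a lp lm t B eta (x ` {..<n})
   = (\<Sum>I\<in>Pow {..<n}. f (x ` I, x ` ({..<n} - I)) *
        (if (\<forall>i\<in>I. \<forall>j<n. x j = x i \<longrightarrow> j \<in> I) then Wt a lp lm t B eta (x ` {..<n}) * nuinf a lp lm t B eta (x ` {..<n}) (x ` I) else 0))"
proof -
  have "finf a lp lm t B eta f (x ` {..<n}) * Wt a lp lm t B eta (x ` {..<n})
      = (\<Sum>S\<in>Pow (x ` {..<n}). f (S, x ` {..<n} - S) * (Wt a lp lm t B eta (x ` {..<n}) * nuinf a lp lm t B eta (x ` {..<n}) S))"
    unfolding finf_def sum_distrib_right by (simp add: mult_ac)
  also have "\<dots> = (\<Sum>I\<in>Pow {..<n}. if (\<forall>i\<in>I. \<forall>j<n. x j = x i \<longrightarrow> j \<in> I) then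
        f (x ` I, x ` {..<n} - x ` I) * (Wt a lp lm t B eta (x ` {..<n}) * nuinf a lp lm t B eta (x ` {..<n}) (x ` I)) else 0)"
    by (rule sum_Pow_image)
  also have "\<dots> = (\<Sum>I\<in>Pow {..<n}. f (x ` I, x ` ({..<n} - I)) *
        (if (\<forall>i\<in>I. \<forall>j<n. x j = x i \<longrightarrow> j \<in> I) then Wt a lp lm t B eta (x ` {..<n}) * nuinf a lp lm t B eta (x ` {..<n}) (x ` I) else 0))"
  proof (intro sum.cong refl)
    fix I assume I: "I \<in> Pow {..<n}"
    have "(\<forall>i\<in>I. \<forall>j<n. x j = x i \<longrightarrow> j \<in> I) \<Longrightarrow> x ` {..<n} - x ` I = x ` ({..<n} - I)"
      using I by auto
    then show "(if (\<forall>i\<in>I. \<forall>j<n. x j = x i \<longrightarrow> j \<in> I) then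
        f (x ` I, x ` {..<n} - x ` I) * (Wt a lp lm t B eta (x ` {..<n}) * nuinf a lp lm t B eta (x ` {..<n}) (x ` I)) else 0)
      = f (x ` I, x ` ({..<n} - I)) * (if (\<forall>i\<in>I. \<forall>j<n. x j = x i \<longrightarrow> j \<in> I) then Wt a lp lm t B eta (x ` {..<n}) * nuinf a lp lm t B eta (x ` {..<n}) (x ` I) else 0)"
      by auto
  qed
  finally show ?thesis .
qed

lemma meas_finfW:
  assumes f: "cfg_measurable f"
  shows "(\<lambda>x. finf a lp lm t B eta f (x ` {..<n}) * Wt a lp lm t B eta (x ` {..<n})) \<in> borel_measurable Mn"
proof -
  have "(\<lambda>x. \<Sum>I\<in>Pow {..<n}. f (x ` I, x ` ({..<n} - I)) *
        (if (\<forall>i\<in>I. \<forall>j<n. x j = x i \<longrightarrow> j \<in> I) then Wt a lp lm t B eta (x ` {..<n}) * nuinf a lp lm t B eta (x ` {..<n}) (x ` I) else 0))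
     \<in> borel_measurable Mn"
    using meas_f[OF f] meas_UI by (intro borel_measurable_sum borel_measurable_times) auto
  then show ?thesis unfolding finfW_eq .
qed

end


context
  fixes S :: "(real^'d::finite) set" and lam :: real
  assumes Sm: "S \<in> sets lebesgue" and Sb: "bounded S" and lam: "lam > 0"
begin

abbreviation MM :: "nat \<Rightarrow> (nat \<Rightarrow> real^'d) measure" where "MM n \<equiv> Pi\<^sub>M {..<n} (\<lambda>_. lebesgue_on S)"

lemma S_lmeas: "S \<in> lmeasurable" using bounded_set_imp_lmeasurable[OF Sb Sm] .

lemma fin_on: "finite_measure (lebesgue_on S)"
proof (rule finite_measureI)
  have "emeasure (lebesgue_on S) (space (lebesgue_on S)) = emeasure lebesgue S"
    using Sm by (simp add: emeasure_restrict_space)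
  also have "\<dots> \<noteq> \<infinity>"
  proof -
    have "emeasure lebesgue S < \<infinity>" using S_lmeas unfolding fmeasurable_def by blast
    then show ?thesis by (rule less_imp_neq)
  qed
  finally show "emeasure (lebesgue_on S) (space (lebesgue_on S)) \<noteq> \<infinity>" .
qed

lemma psf: "product_sigma_finite (\<lambda>_. lebesgue_on S)"
  using fin_on by (intro product_sigma_finite.intro) (simp add: finite_measure.axioms(1))

lemma one_int: "integrable (MM n) (\<lambda>x. 1 :: real)" and one_integral: "(\<integral>x. (1::real) \<partial>MM n) = measure lebesgue S ^ n"
proof -
  have i1: "integrable (lebesgue_on S) (\<lambda>_. 1 :: real)"
    using fin_on by (simp add: finite_measure.integrable_const)
  have "integrable (MM n) (\<lambda>x. \<Prod>i\<in>{..<n}. (\<lambda>_. 1 :: real) (x i))"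
    by (rule product_sigma_finite.product_integrable_prod[OF psf]) (use i1 in auto)
  then show "integrable (MM n) (\<lambda>x. 1 :: real)" by simp
  have "(\<integral>x. (\<Prod>i\<in>{..<n}. (\<lambda>_. 1 :: real) (x i)) \<partial>MM n) = (\<Prod>i\<in>{..<n}. \<integral>y. (1::real) \<partial>lebesgue_on S)"
    by (rule product_sigma_finite.product_integral_prod[OF psf]) (use i1 in auto)
  also have "(\<integral>y. (1::real) \<partial>lebesgue_on S) = measure lebesgue S"
    using Sm by (simp add: measure_restrict_space)
  finally show "(\<integral>x. (1::real) \<partial>MM n) = measure lebesgue S ^ n" by simp
qed

definition goodF :: "((real^'d) set \<Rightarrow> real) \<Rightarrow> bool" where "goodF F \<longleftrightarrow> (\<exists>K M0. 0 \<le> M0 \<and> (\<forall>n. (\<lambda>x. F (x ` {..<n})) \<in> borel_measurable (MM n)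
    \<and> (\<forall>x\<in>space (MM n). \<bar>F (x ` {..<n})\<bar> \<le> K * M0 ^ n)))"

lemma goodF_int: "goodF F \<Longrightarrow> integrable (MM n) (\<lambda>x. F (x ` {..<n}))"
proof -
  assume "goodF F"
  then obtain K M0 where m: "(\<lambda>x. F (x ` {..<n})) \<in> borel_measurable (MM n)"
    and b: "\<forall>x\<in>space (MM n). \<bar>F (x ` {..<n})\<bar> \<le> K * M0 ^ n" unfolding goodF_def by blast
  show ?thesis
  proof (rule Bochner_Integration.integrable_bound)
    show "(\<lambda>x. F (x ` {..<n})) \<in> borel_measurable (MM n)" by (rule m)
    show "integrable (MM n) (\<lambda>x. K * M0 ^ n * 1)" using one_int by (rule integrable_mult_right)
    show "AE x in MM n. norm (F (x ` {..<n})) \<le> norm (K * M0 ^ n * 1)"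
      using b by (intro AE_I2) auto
  qed
qed

lemma goodF_bound: "goodF F \<Longrightarrow> \<exists>K M0. 0 \<le> M0 \<and> (\<forall>n. \<bar>\<integral>x. F (x ` {..<n}) \<partial>MM n\<bar> \<le> K * M0 ^ n * measure lebesgue S ^ n)"
proof -
  assume g: "goodF F"
  then obtain K M0 where M0: "0 \<le> M0" and b: "\<forall>n::nat. \<forall>x\<in>space (MM n). \<bar>F (x ` {..<n})\<bar> \<le> K * M0 ^ n" unfolding goodF_def by blast
  have "\<bar>\<integral>x. F (x ` {..<n}) \<partial>MM n\<bar> \<le> K * M0 ^ n * measure lebesgue S ^ n" for n
  proof -
    have "\<bar>\<integral>x. F (x ` {..<n}) \<partial>MM n\<bar> \<le> (\<integral>x. \<bar>F (x ` {..<n})\<bar> \<partial>MM n)"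
      using integral_norm_bound[of "MM n" "\<lambda>x. F (x ` {..<n})"] by simp
    also have "\<dots> \<le> (\<integral>x. K * M0 ^ n * 1 \<partial>MM n)"
    proof (rule integral_mono)
      show "integrable (MM n) (\<lambda>x. \<bar>F (x ` {..<n})\<bar>)" using goodF_int[OF g] by (rule integrable_abs)
      show "integrable (MM n) (\<lambda>x. K * M0 ^ n * 1)" using one_int by (rule integrable_mult_right)
      show "\<And>x. x \<in> space (MM n) \<Longrightarrow> \<bar>F (x ` {..<n})\<bar> \<le> K * M0 ^ n * 1" using b by simp
    qed
    also have "\<dots> = K * M0 ^ n * measure lebesgue S ^ n" using one_integral by simp
    finally show ?thesis .
  qed
  then show ?thesis using M0 by blast
qed

definition "cn n = exp (- lam * measure lebesgue S) * lam ^ n / fact n"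

lemma cn_pos: "cn n > 0" using lam by (simp add: cn_def)

lemma PI_eq: "poisson_int lam S F = (\<Sum>n. cn n * (\<integral>x. F (x ` {..<n}) \<partial>MM n))"
  by (simp add: poisson_int_def cn_def)

lemma goodF_summable: "goodF F \<Longrightarrow> summable (\<lambda>n. cn n * (\<integral>x. F (x ` {..<n}) \<partial>MM n))"
proof -
  assume g: "goodF F"
  obtain K M0 where M0: "0 \<le> M0" and b: "\<And>n. \<bar>\<integral>x. F (x ` {..<n}) \<partial>MM n\<bar> \<le> K * M0 ^ n * measure lebesgue S ^ n"
    using goodF_bound[OF g] by blast
  define q where "q = lam * M0 * measure lebesgue S"
  have s: "summable (\<lambda>n. exp (- lam * measure lebesgue S) * K * (inverse (fact n) * q ^ n))"
    by (intro summable_mult summable_exp)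
  show ?thesis
  proof (rule summable_comparison_test'[OF s])
    fix n :: nat
    have "norm (cn n * (\<integral>x. F (x ` {..<n}) \<partial>MM n)) = cn n * \<bar>\<integral>x. F (x ` {..<n}) \<partial>MM n\<bar>"
      using cn_pos[of n] by (simp add: abs_mult)
    also have "\<dots> \<le> cn n * (K * M0 ^ n * measure lebesgue S ^ n)"
      using cn_pos[of n] b[of n] by (intro mult_left_mono) auto
    also have "\<dots> = exp (- lam * measure lebesgue S) * K * (inverse (fact n) * q ^ n)"
      by (simp add: cn_def q_def power_mult_distrib field_simps)
    finally show "norm (cn n * (\<integral>x. F (x ` {..<n}) \<partial>MM n)) \<le> exp (- lam * measure lebesgue S) * K * (inverse (fact n) * q ^ n)" .
  qed
qed

lemma goodF_add: "goodF F \<Longrightarrow> goodF G \<Longrightarrow> goodF (\<lambda>w. F w + c * G w)"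
proof -
  assume "goodF F" "goodF G"
  then obtain K1 M1 K2 M2 where M: "0 \<le> M1" "0 \<le> M2"
    and m1: "\<forall>n. (\<lambda>x. F (x ` {..<n})) \<in> borel_measurable (MM n)" and b1: "\<forall>n. \<forall>x\<in>space (MM n). \<bar>F (x ` {..<n})\<bar> \<le> K1 * M1 ^ n"
    and m2: "\<forall>n. (\<lambda>x. G (x ` {..<n})) \<in> borel_measurable (MM n)" and b2: "\<forall>n. \<forall>x\<in>space (MM n). \<bar>G (x ` {..<n})\<bar> \<le> K2 * M2 ^ n"
    unfolding goodF_def by metis
  define M where "M = max 1 (max M1 M2)"
  define K where "K = \<bar>K1\<bar> + \<bar>c\<bar> * \<bar>K2\<bar>"
  have "\<forall>n. (\<lambda>x. F (x ` {..<n}) + c * G (x ` {..<n})) \<in> borel_measurable (MM n)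
      \<and> (\<forall>x\<in>space (MM n). \<bar>F (x ` {..<n}) + c * G (x ` {..<n})\<bar> \<le> K * M ^ n)"
  proof (intro allI conjI ballI)
    fix n
    show "(\<lambda>x. F (x ` {..<n}) + c * G (x ` {..<n})) \<in> borel_measurable (MM n)"
      using m1 m2 by (intro borel_measurable_add borel_measurable_times borel_measurable_const) auto
  next
    fix n x assume x: "x \<in> space (MM n)"
    have p1: "M1 ^ n \<le> M ^ n" using M by (intro power_mono) (auto simp: M_def)
    have p2: "M2 ^ n \<le> M ^ n" using M by (intro power_mono) (auto simp: M_def)
    have "K1 * M1 ^ n \<le> \<bar>K1\<bar> * M1 ^ n" using M by (intro mult_right_mono) auto
    also have "\<dots> \<le> \<bar>K1\<bar> * M ^ n" using p1 by (intro mult_left_mono) auto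
    finally have f1: "\<bar>F (x ` {..<n})\<bar> \<le> \<bar>K1\<bar> * M ^ n" using b1 x by force
    have "K2 * M2 ^ n \<le> \<bar>K2\<bar> * M2 ^ n" using M by (intro mult_right_mono) auto
    also have "\<dots> \<le> \<bar>K2\<bar> * M ^ n" using p2 by (intro mult_left_mono) auto
    finally have f2: "\<bar>G (x ` {..<n})\<bar> \<le> \<bar>K2\<bar> * M ^ n" using b2 x by force
    have "\<bar>F (x ` {..<n}) + c * G (x ` {..<n})\<bar> \<le> \<bar>F (x ` {..<n})\<bar> + \<bar>c\<bar> * \<bar>G (x ` {..<n})\<bar>"
      by (simp add: abs_mult[symmetric] abs_triangle_ineq)
    also have "\<dots> \<le> \<bar>K1\<bar> * M ^ n + \<bar>c\<bar> * (\<bar>K2\<bar> * M ^ n)"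
      using f1 f2 by (intro add_mono mult_left_mono) auto
    also have "\<dots> = K * M ^ n" by (simp add: K_def algebra_simps)
    finally show "\<bar>F (x ` {..<n}) + c * G (x ` {..<n})\<bar> \<le> K * M ^ n" .
  qed
  moreover have "0 \<le> M" by (simp add: M_def)
  ultimately show ?thesis unfolding goodF_def by blast
qed

lemma PI_add: "goodF F \<Longrightarrow> goodF G \<Longrightarrow> poisson_int lam S (\<lambda>w. F w + c * G w) = poisson_int lam S F + c * poisson_int lam S G"
proof -
  assume f: "goodF F" and g: "goodF G"
  have i: "(\<integral>x. F (x ` {..<n}) + c * G (x ` {..<n}) \<partial>MM n) = (\<integral>x. F (x ` {..<n}) \<partial>MM n) + c * (\<integral>x. G (x ` {..<n}) \<partial>MM n)" for n
    using goodF_int[OF f, of n] goodF_int[OF g, of n] by simp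
  have "poisson_int lam S (\<lambda>w. F w + c * G w) = (\<Sum>n. cn n * (\<integral>x. F (x ` {..<n}) \<partial>MM n) + c * (cn n * (\<integral>x. G (x ` {..<n}) \<partial>MM n)))"
    unfolding PI_eq i by (simp add: algebra_simps)
  also have "\<dots> = (\<Sum>n. cn n * (\<integral>x. F (x ` {..<n}) \<partial>MM n)) + (\<Sum>n. c * (cn n * (\<integral>x. G (x ` {..<n}) \<partial>MM n)))"
    by (rule suminf_add[symmetric, OF goodF_summable[OF f] summable_mult[OF goodF_summable[OF g]]])
  also have "(\<Sum>n. c * (cn n * (\<integral>x. G (x ` {..<n}) \<partial>MM n))) = c * (\<Sum>n. cn n * (\<integral>x. G (x ` {..<n}) \<partial>MM n))"
    by (rule suminf_mult[OF goodF_summable[OF g]])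
  finally show ?thesis unfolding PI_eq .
qed

lemma space_MM_sub: "x \<in> space (MM n) \<Longrightarrow> x ` {..<n} \<subseteq> S"
  by (auto simp: space_PiM PiE_def Pi_def)

lemma PI_mono: "goodF F \<Longrightarrow> goodF G \<Longrightarrow> (\<And>w. finite w \<Longrightarrow> w \<subseteq> S \<Longrightarrow> F w \<le> G w) \<Longrightarrow> poisson_int lam S F \<le> poisson_int lam S G"
proof -
  assume f: "goodF F" and g: "goodF G" and le: "\<And>w. finite w \<Longrightarrow> w \<subseteq> S \<Longrightarrow> F w \<le> G w"
  show ?thesis unfolding PI_eq
  proof (rule suminf_le[OF _ goodF_summable[OF f] goodF_summable[OF g]])
    fix n
    have "(\<integral>x. F (x ` {..<n}) \<partial>MM n) \<le> (\<integral>x. G (x ` {..<n}) \<partial>MM n)"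
      using goodF_int[OF f] goodF_int[OF g] le[OF finite_imageI[OF finite_lessThan] space_MM_sub] by (intro integral_mono) auto
    then show "cn n * (\<integral>x. F (x ` {..<n}) \<partial>MM n) \<le> cn n * (\<integral>x. G (x ` {..<n}) \<partial>MM n)"
      using cn_pos[of n] by (simp add: mult_left_mono)
  qed
qed

lemma PI_pos: "goodF F \<Longrightarrow> (\<And>w. finite w \<Longrightarrow> w \<subseteq> S \<Longrightarrow> F w > 0) \<Longrightarrow> poisson_int lam S F > 0"
proof -
  assume f: "goodF F" and pos: "\<And>w. finite w \<Longrightarrow> w \<subseteq> S \<Longrightarrow> F w > 0"
  have nn: "0 \<le> cn n * (\<integral>x. F (x ` {..<n}) \<partial>MM n)" for n
  proof -
    have "0 \<le> (\<integral>x. F (x ` {..<n}) \<partial>MM n)"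
      using pos[OF finite_imageI[OF finite_lessThan] space_MM_sub] by (intro Bochner_Integration.integral_nonneg) (simp add: less_imp_le)
    then show ?thesis using cn_pos[of n] by simp
  qed
  have "(\<integral>x. F (x ` {..<0}) \<partial>MM 0) = F {}"
    by (simp add: PiM_empty lebesgue_integral_count_space_finite)
  then have "0 < cn 0 * (\<integral>x. F (x ` {..<0}) \<partial>MM 0)" using cn_pos[of 0] pos[of "{}"] by simp
  also have "\<dots> = (\<Sum>n<1. cn n * (\<integral>x. F (x ` {..<n}) \<partial>MM n))" by simp
  also have "\<dots> \<le> (\<Sum>n. cn n * (\<integral>x. F (x ` {..<n}) \<partial>MM n))"
    by (rule sum_le_suminf[OF goodF_summable[OF f]]) (use nn in auto)
  finally show ?thesis unfolding PI_eq .
qed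

end


lemma ratio_bound:
  fixes a1 a2 I1 I2 c m :: real
  assumes "I1 > 0" "I2 > 0" "c \<ge> 1" "0 \<le> a1" "0 \<le> a2" "a1 \<le> c * a2" "a2 \<le> c * a1"
    "I1 \<le> c * I2" "I2 \<le> c * I1" "a1 \<le> 2 * m * I1" "a2 \<le> 2 * m * I2"
  shows "\<bar>(a1 - m * I1) / I1 - (a2 - m * I2) / I2\<bar> \<le> 2 * m * (c ^ 2 - 1)"
proof -
  have e1: "(a1 - m * I1) / I1 - (a2 - m * I2) / I2 = a1 / I1 - a2 / I2" using assms(1,2) by (simp add: field_simps)
  have q1: "a1 / I1 \<le> c ^ 2 * (a2 / I2)"
  proof -
    have "a1 / I1 \<le> c * a2 / I1" using assms by (simp add: divide_right_mono)
    also have "\<dots> \<le> c * a2 / (I2 / c)"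
      using assms by (intro divide_left_mono mult_nonneg_nonneg mult_pos_pos) (auto simp: field_simps)
    also have "\<dots> = c ^ 2 * (a2 / I2)" using assms by (simp add: field_simps power2_eq_square)
    finally show ?thesis .
  qed
  have q2: "a2 / I2 \<le> c ^ 2 * (a1 / I1)"
  proof -
    have "a2 / I2 \<le> c * a1 / I2" using assms by (simp add: divide_right_mono)
    also have "\<dots> \<le> c * a1 / (I1 / c)"
      using assms by (intro divide_left_mono mult_nonneg_nonneg mult_pos_pos) (auto simp: field_simps)
    also have "\<dots> = c ^ 2 * (a1 / I1)" using assms by (simp add: field_simps power2_eq_square)
    finally show ?thesis .
  qed
  have b1: "a1 / I1 \<le> 2 * m" "a2 / I2 \<le> 2 * m" using assms by (simp_all add: divide_le_eq)
  have n1: "0 \<le> a1 / I1" "0 \<le> a2 / I2" using assms by simp_all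
  have c2: "c ^ 2 - 1 \<ge> 0" using assms(3) by (simp add: one_le_power)
  have "a1 / I1 - a2 / I2 \<le> (c ^ 2 - 1) * (a2 / I2)" using q1 by (simp add: algebra_simps)
  also have "\<dots> \<le> (c ^ 2 - 1) * (2 * m)" using b1 c2 by (intro mult_left_mono) auto
  finally have u: "a1 / I1 - a2 / I2 \<le> 2 * m * (c ^ 2 - 1)" by (simp add: mult.commute)
  have "a2 / I2 - a1 / I1 \<le> (c ^ 2 - 1) * (a1 / I1)" using q2 by (simp add: algebra_simps)
  also have "\<dots> \<le> (c ^ 2 - 1) * (2 * m)" using b1 c2 by (intro mult_left_mono) auto
  finally have v: "a2 / I2 - a1 / I1 \<le> 2 * m * (c ^ 2 - 1)" by (simp add: mult.commute)
  show ?thesis unfolding e1 using u v by linarith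
qed

lemma pow_bound: "0 \<le> (x::real) \<Longrightarrow> (1 + x) ^ N - 1 \<le> real N * x * (1 + x) ^ N"
proof (induction N)
  case 0 then show ?case by simp
next
  case (Suc N)
  have p: "(1 + x) ^ N \<le> (1 + x) ^ Suc N" using Suc.prems by (simp add: power_increasing)
  have "(1 + x) ^ Suc N - 1 = (1 + x) * ((1 + x) ^ N - 1) + x" by (simp add: algebra_simps)
  also have "\<dots> \<le> (1 + x) * (real N * x * (1 + x) ^ N) + x"
    using Suc by (intro add_right_mono mult_left_mono) auto
  also have "\<dots> = real N * x * (1 + x) ^ Suc N + x" by (simp add: algebra_simps)
  also have "\<dots> \<le> real N * x * (1 + x) ^ Suc N + x * (1 + x) ^ Suc N"
  proof -
    have "1 \<le> (1 + x) ^ Suc N" by (rule one_le_power) (use Suc.prems in simp)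
    then have "x * 1 \<le> x * (1 + x) ^ Suc N" using Suc.prems by (intro mult_left_mono) auto
    then show ?thesis by simp
  qed
  also have "\<dots> = real (Suc N) * x * (1 + x) ^ Suc N" by (simp add: algebra_simps)
  finally show ?case .
qed

locale mainloc = setup0 +
  fixes x0 :: "real^'d::finite" and r :: real and L :: "(real^'d) set" and w :: "'d ccfg" and f :: "'d ccfg \<Rightarrow> real"
  assumes r_pos: "r > 0" and Lm: "L \<in> sets lebesgue" and Lb: "bounded L" and BL: "ball x0 r \<subseteq> L"
    and w_cf: "w \<in> ccfgs" and fFb: "f \<in> Fb (ball x0 r)"
begin

definition "B0 = ball x0 r"
definition "eta w' = cat (restr w (L - B0)) (restr w' (- L))"
definition "Psi w' om = Wt a lp lm t B0 (eta w') om"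
definition "Phi w' om = finf a lp lm t B0 (eta w') f om * Wt a lp lm t B0 (eta w') om"
definition "m = supnorm f"
definition "cc = (1 + geo.kap a lp lm t x0 r L) ^ (geo.Pn TYPE('d) a r)"
definition "Xs om = (\<Sum>S\<in>Pow om. (f (S, om - S) + m) * geo.Com a lp lm t x0 r L w om S)"
definition "Ys om = (\<Sum>S\<in>Pow om. geo.Com a lp lm t x0 r L w om S)"

lemma geoI: "w' \<in> ccfgs \<Longrightarrow> finite om \<Longrightarrow> om \<subseteq> B0 \<Longrightarrow> geo a lp lm t x0 r L w w' om"
  unfolding geo_def geo_axioms_def using setup0_axioms r_pos Lb BL w_cf by (auto simp: B0_def)

lemma B_eq: "geo.B x0 r = B0"
proof -
  interpret G: geo a lp lm t x0 r L w w "{}" using geoI[OF w_cf] by (auto simp: B0_def)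
  show ?thesis by (simp add: G.B_def B0_def)
qed
lemma eta_eq: "w' \<in> ccfgs \<Longrightarrow> geo.eta' x0 r L w w' = eta w'"
proof -
  assume w': "w' \<in> ccfgs"
  interpret G: geo a lp lm t x0 r L w w' "{}" using geoI[OF w'] by (auto simp: B0_def)
  show ?thesis by (simp add: G.eta'_def eta_def B_eq)
qed

lemma Bm: "B0 \<in> sets lebesgue" by (simp add: B0_def)
lemma Bb: "bounded B0" by (simp add: B0_def)

lemma ccfg_pair: "finite om \<Longrightarrow> S \<subseteq> om \<Longrightarrow> (S, om - S) \<in> ccfgs"
  by (auto simp: ccfgs_def locfin_def grey_def intro: finite_subset)

lemma f_le: "w0 \<in> ccfgs \<Longrightarrow> \<bar>f w0\<bar> \<le> m"
proof -
  assume w0: "w0 \<in> ccfgs"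
  have "bounded (f ` ccfgs)" using fFb by (simp add: Fb_def)
  then obtain M where "\<forall>y\<in>f ` ccfgs. \<bar>y\<bar> \<le> M" by (auto simp: bounded_real)
  then have bdd: "bdd_above ((\<lambda>w. \<bar>f w\<bar>) ` ccfgs)" by (auto intro: bdd_aboveI2)
  show ?thesis unfolding m_def supnorm_def by (rule cSUP_upper[OF w0 bdd])
qed

lemma m_nonneg: "m \<ge> 0"
proof -
  have "({}, {}) \<in> ccfgs" using ccfg_pair[of "{}" "{}"] by simp
  then show ?thesis using f_le[of "({}, {})"] by (meson abs_ge_zero order_trans)
qed

lemma fS: "finite om \<Longrightarrow> S \<subseteq> om \<Longrightarrow> \<bar>f (S, om - S)\<bar> \<le> m"
  using f_le ccfg_pair by blast

context
  fixes w' :: "'d ccfg" and om :: "(real^'d) set" assumes w'c: "w' \<in> ccfgs" and fo: "finite om" and oB: "om \<subseteq> B0"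
begin

interpretation G: geo a lp lm t x0 r L w w' om by (rule geoI[OF w'c fo oB])

definition "UU S = (\<Prod>C\<in>G.CLs. uC lp lm t B0 (eta w') S C)"

lemma UU_eq: "Wt a lp lm t B0 (eta w') om * nuinf a lp lm t B0 (eta w') om S = UU S"
  using G.U_eq[of S] unfolding UU_def B_eq eta_eq[OF w'c] .

lemma UU_nonneg: "UU S \<ge> 0" unfolding UU_def by (rule prod_nonneg) (rule uC_nonneg)

lemma Psi_sum: "Psi w' om = (\<Sum>S\<in>Pow om. UU S)"
proof -
  have "(\<Sum>S\<in>Pow om. UU S) = Wt a lp lm t B0 (eta w') om * (\<Sum>S\<in>Pow om. nuinf a lp lm t B0 (eta w') om S)"
    unfolding UU_eq[symmetric] sum_distrib_left ..
  also have "(\<Sum>S\<in>Pow om. nuinf a lp lm t B0 (eta w') om S) = 1" using G.nu_sum1 unfolding B_eq eta_eq[OF w'c] .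
  finally show ?thesis by (simp add: Psi_def)
qed

lemma Phi_sum: "Phi w' om = (\<Sum>S\<in>Pow om. f (S, om - S) * UU S)"
  unfolding Phi_def finf_def sum_distrib_right UU_eq[symmetric] by (simp add: mult_ac)

lemma Psi_pos: "Psi w' om > 0" using G.Wt_pos unfolding Psi_def B_eq eta_eq[OF w'c] .

lemma Phi_abs: "\<bar>Phi w' om\<bar> \<le> m * Psi w' om"
proof -
  have "\<bar>Phi w' om\<bar> \<le> (\<Sum>S\<in>Pow om. \<bar>f (S, om - S) * UU S\<bar>)" unfolding Phi_sum by (rule sum_abs)
  also have "\<dots> \<le> (\<Sum>S\<in>Pow om. m * UU S)"
    using fS[OF fo] UU_nonneg by (intro sum_mono) (auto simp: abs_mult intro: mult_right_mono)
  also have "\<dots> = m * Psi w' om" by (simp add: Psi_sum sum_distrib_left)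
  finally show ?thesis .
qed

lemma cc_eq: "cc = (1 + G.kap) ^ G.Pn" by (simp add: cc_def)

lemma bounds: "Xs om \<le> Phi w' om + m * Psi w' om \<and> Phi w' om + m * Psi w' om \<le> cc * Xs om
    \<and> Ys om \<le> Psi w' om \<and> Psi w' om \<le> cc * Ys om"
proof -
  have ub: "G.Com S \<le> UU S \<and> UU S \<le> cc * G.Com S" if "S \<in> Pow om" for S
    using G.U_bounds[of S] that unfolding UU_def B_eq eta_eq[OF w'c] cc_eq by auto
  have e: "Phi w' om + m * Psi w' om = (\<Sum>S\<in>Pow om. (f (S, om - S) + m) * UU S)"
    unfolding Phi_sum Psi_sum sum_distrib_left sum.distrib[symmetric] by (intro sum.cong refl) (simp add: distrib_right)
  have fm: "0 \<le> f (S, om - S) + m" if "S \<in> Pow om" for S using fS[OF fo, of S] that by auto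
  have "Xs om \<le> Phi w' om + m * Psi w' om" unfolding e Xs_def
  proof (rule sum_mono)
    fix S assume S: "S \<in> Pow om"
    show "(f (S, om - S) + m) * G.Com S \<le> (f (S, om - S) + m) * UU S"
      using ub[OF S] fm[OF S] by (intro mult_left_mono) auto
  qed
  moreover have "Phi w' om + m * Psi w' om \<le> cc * Xs om" unfolding e Xs_def sum_distrib_left
  proof (rule sum_mono)
    fix S assume S: "S \<in> Pow om"
    have "(f (S, om - S) + m) * UU S \<le> (f (S, om - S) + m) * (cc * G.Com S)"
      using ub[OF S] fm[OF S] by (intro mult_left_mono) auto
    then show "(f (S, om - S) + m) * UU S \<le> cc * ((f (S, om - S) + m) * G.Com S)" by (simp add: mult_ac)
  qed
  moreover have "Ys om \<le> Psi w' om" unfolding Psi_sum Ys_def using ub by (intro sum_mono) blast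
  moreover have "Psi w' om \<le> cc * Ys om" unfolding Psi_sum Ys_def sum_distrib_left using ub by (intro sum_mono) blast
  ultimately show ?thesis by blast
qed

lemma Psi_le: "Psi w' om \<le> 2 ^ card (G.E' \<inter> nbhd a B0) * (2 * al) ^ card om"
  using G.Wt_le unfolding Psi_def B_eq eta_eq[OF w'c] .

end

lemma E'_indep: "w' \<in> ccfgs \<Longrightarrow> geo.E' x0 r L w w' = grey (restr (eta w') (- B0))"
proof -
  assume w': "w' \<in> ccfgs"
  interpret G: geo a lp lm t x0 r L w w' "{}" using geoI[OF w'] by (auto simp: B0_def)
  show ?thesis by (simp add: G.E'_def eta_eq[OF w', symmetric] B_eq[symmetric])
qed

lemma finE0: "w' \<in> ccfgs \<Longrightarrow> finite (E0 a B0 (eta w'))"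
proof -
  assume w': "w' \<in> ccfgs"
  interpret G: geo a lp lm t x0 r L w w' "{}" by (rule geoI[OF w']) auto
  have "finite (G.V' \<inter> nbhd a (geo.B x0 r))" by (rule G.fin_V'_nb)
  then show ?thesis unfolding G.V'_def E'_indep[OF w'] B_eq by (simp add: E0_def[OF a_pos] EE_def[OF a_pos])
qed

lemma good_Psi: "w' \<in> ccfgs \<Longrightarrow> goodF B0 (Psi w')"
proof -
  assume w': "w' \<in> ccfgs"
  define K where "K = (2::real) ^ card (grey (restr (eta w') (- B0)) \<inter> nbhd a B0)"
  have "\<forall>n::nat. (\<lambda>x. Psi w' (x ` {..<n})) \<in> borel_measurable (Pi\<^sub>M {..<n} (\<lambda>_. lebesgue_on B0))
      \<and> (\<forall>x\<in>space (Pi\<^sub>M {..<n} (\<lambda>_. lebesgue_on B0)). \<bar>Psi w' (x ` {..<n})\<bar> \<le> K * (2 * al) ^ n)"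
  proof (intro allI conjI ballI)
    fix n :: nat
    show "(\<lambda>x. Psi w' (x ` {..<n})) \<in> borel_measurable (Pi\<^sub>M {..<n} (\<lambda>_. lebesgue_on B0))"
      unfolding Psi_def using a_pos Bm finE0[OF w'] by (rule meas_Wt)
  next
    fix n :: nat and x assume x: "x \<in> space (Pi\<^sub>M {..<n} (\<lambda>_. lebesgue_on B0))"
    have fo: "finite (x ` {..<n})" by simp
    have oB: "x ` {..<n} \<subseteq> B0" using x by (auto simp: space_PiM PiE_def Pi_def)
    have "\<bar>Psi w' (x ` {..<n})\<bar> = Psi w' (x ` {..<n})" using Psi_pos[OF w' fo oB] by simp
    also have "\<dots> \<le> K * (2 * al) ^ card (x ` {..<n})"
      using Psi_le[OF w' fo oB] unfolding K_def E'_indep[OF w'] .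
    also have "\<dots> \<le> K * (2 * al) ^ n"
      using al_gt1 card_image_le[of "{..<n}" x] by (intro mult_left_mono power_increasing) (auto simp: K_def)
    finally show "\<bar>Psi w' (x ` {..<n})\<bar> \<le> K * (2 * al) ^ n" .
  qed
  moreover have "0 \<le> 2 * al" using al_gt1 by simp
  ultimately show ?thesis unfolding goodF_def[OF Bm Bb lm_pos] by blast
qed

lemma good_Phi: "w' \<in> ccfgs \<Longrightarrow> goodF B0 (Phi w')"
proof -
  assume w': "w' \<in> ccfgs"
  obtain K M0 where M0: "0 \<le> M0" and hp: "\<forall>n::nat. (\<lambda>x. Psi w' (x ` {..<n})) \<in> borel_measurable (Pi\<^sub>M {..<n} (\<lambda>_. lebesgue_on B0))
      \<and> (\<forall>x\<in>space (Pi\<^sub>M {..<n} (\<lambda>_. lebesgue_on B0)). \<bar>Psi w' (x ` {..<n})\<bar> \<le> K * M0 ^ n)"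
    using good_Psi[OF w'] unfolding goodF_def[OF Bm Bb lm_pos] by blast
  have cm: "cfg_measurable f" using fFb by (simp add: Fb_def)
  have "\<forall>n::nat. (\<lambda>x. Phi w' (x ` {..<n})) \<in> borel_measurable (Pi\<^sub>M {..<n} (\<lambda>_. lebesgue_on B0))
      \<and> (\<forall>x\<in>space (Pi\<^sub>M {..<n} (\<lambda>_. lebesgue_on B0)). \<bar>Phi w' (x ` {..<n})\<bar> \<le> (m * K) * M0 ^ n)"
  proof (intro allI conjI ballI)
    fix n :: nat
    show "(\<lambda>x. Phi w' (x ` {..<n})) \<in> borel_measurable (Pi\<^sub>M {..<n} (\<lambda>_. lebesgue_on B0))"
      unfolding Phi_def using a_pos Bm finE0[OF w'] cm by (rule meas_finfW)
  next
    fix n :: nat and x assume x: "x \<in> space (Pi\<^sub>M {..<n} (\<lambda>_. lebesgue_on B0))"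
    have fo: "finite (x ` {..<n})" by simp
    have oB: "x ` {..<n} \<subseteq> B0" using x by (auto simp: space_PiM PiE_def Pi_def)
    have "\<bar>Phi w' (x ` {..<n})\<bar> \<le> m * Psi w' (x ` {..<n})" by (rule Phi_abs[OF w' fo oB])
    also have "\<dots> \<le> m * (K * M0 ^ n)"
    proof -
      have "\<bar>Psi w' (x ` {..<n})\<bar> \<le> K * M0 ^ n" using hp x by blast
      then have "Psi w' (x ` {..<n}) \<le> K * M0 ^ n" by (meson abs_ge_self order_trans)
      then show ?thesis using m_nonneg by (intro mult_left_mono) auto
    qed
    finally show "\<bar>Phi w' (x ` {..<n})\<bar> \<le> (m * K) * M0 ^ n" by (simp add: mult.assoc)
  qed
  then show ?thesis using M0 unfolding goodF_def[OF Bm Bb lm_pos] by blast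
qed

lemma cc_ge1: "cc \<ge> 1"
proof -
  interpret G: geo a lp lm t x0 r L w w "{}" using geoI[OF w_cf] by (auto simp: B0_def)
  have "geo.kap a lp lm t x0 r L \<ge> 0" by (rule G.kap_nonneg)
  then show ?thesis unfolding cc_def by (simp add: one_le_power)
qed

lemma good0: "goodF B0 (\<lambda>_. 0)" unfolding goodF_def[OF Bm Bb lm_pos] by (intro exI[of _ 0] exI[of _ 1]) simp

lemma goodF_scale: "goodF B0 G \<Longrightarrow> goodF B0 (\<lambda>w. c * G w)"
  using goodF_add[OF Bm Bb lm_pos good0, of G c] by simp

lemma PI_scale: "goodF B0 G \<Longrightarrow> poisson_int lm B0 (\<lambda>w. c * G w) = c * poisson_int lm B0 G"
proof -
  assume g: "goodF B0 G"
  have "poisson_int lm B0 (\<lambda>w. 0 + c * G w) = poisson_int lm B0 (\<lambda>_. 0) + c * poisson_int lm B0 G"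
    by (rule PI_add[OF Bm Bb lm_pos good0 g])
  moreover have "poisson_int lm B0 (\<lambda>_. 0) = 0" by (simp add: poisson_int_def)
  ultimately show ?thesis by simp
qed

lemma PI_le_scale:
  assumes "goodF B0 F" "goodF B0 G" "\<And>om. finite om \<Longrightarrow> om \<subseteq> B0 \<Longrightarrow> F om \<le> c * G om"
  shows "poisson_int lm B0 F \<le> c * poisson_int lm B0 G"
proof -
  have "poisson_int lm B0 F \<le> poisson_int lm B0 (\<lambda>w. c * G w)"
    by (rule PI_mono[OF Bm Bb lm_pos assms(1) goodF_scale[OF assms(2)]]) (rule assms(3))
  then show ?thesis using PI_scale[OF assms(2)] by simp
qed

lemma PI_nonneg:
  assumes "goodF B0 F" "\<And>om. finite om \<Longrightarrow> om \<subseteq> B0 \<Longrightarrow> 0 \<le> F om"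
  shows "0 \<le> poisson_int lm B0 F"
proof -
  have "poisson_int lm B0 (\<lambda>_. 0) \<le> poisson_int lm B0 F"
    by (rule PI_mono[OF Bm Bb lm_pos good0 assms(1)]) (rule assms(2))
  then show ?thesis by (simp add: poisson_int_def)
qed

lemma Phi_rng: "w' \<in> ccfgs \<Longrightarrow> finite om \<Longrightarrow> om \<subseteq> B0 \<Longrightarrow> 0 \<le> Phi w' om + m * Psi w' om \<and> Phi w' om + m * Psi w' om \<le> 2 * m * Psi w' om"
proof -
  assume "w' \<in> ccfgs" "finite om" "om \<subseteq> B0"
  then have "\<bar>Phi w' om\<bar> \<le> m * Psi w' om" by (rule Phi_abs)
  then show ?thesis by (simp add: abs_le_iff)
qed

lemma main_diff:
  assumes w1: "w1 \<in> ccfgs" and w2: "w2 \<in> ccfgs"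
  shows "\<bar>gamma_inf a lp lm t B0 f (eta w1) - gamma_inf a lp lm t B0 f (eta w2)\<bar> \<le> 2 * m * (cc ^ 2 - 1)"
proof -
  let ?PI = "poisson_int lm B0"
  define I1 where "I1 = ?PI (Psi w1)"
  define I2 where "I2 = ?PI (Psi w2)"
  define a1 where "a1 = ?PI (\<lambda>om. Phi w1 om + m * Psi w1 om)"
  define a2 where "a2 = ?PI (\<lambda>om. Phi w2 om + m * Psi w2 om)"
  have gP1: "goodF B0 (Psi w1)" "goodF B0 (Phi w1)" using good_Psi[OF w1] good_Phi[OF w1] .
  have gP2: "goodF B0 (Psi w2)" "goodF B0 (Phi w2)" using good_Psi[OF w2] good_Phi[OF w2] .
  have ga1: "goodF B0 (\<lambda>om. Phi w1 om + m * Psi w1 om)" by (rule goodF_add[OF Bm Bb lm_pos gP1(2) gP1(1)])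
  have ga2: "goodF B0 (\<lambda>om. Phi w2 om + m * Psi w2 om)" by (rule goodF_add[OF Bm Bb lm_pos gP2(2) gP2(1)])
  have A1: "a1 = ?PI (Phi w1) + m * I1" unfolding a1_def I1_def by (rule PI_add[OF Bm Bb lm_pos gP1(2) gP1(1)])
  have A2: "a2 = ?PI (Phi w2) + m * I2" unfolding a2_def I2_def by (rule PI_add[OF Bm Bb lm_pos gP2(2) gP2(1)])
  have g1: "gamma_inf a lp lm t B0 f (eta w1) = (a1 - m * I1) / I1"
    by (simp add: gamma_inf_def A1 I1_def Phi_def[abs_def] Psi_def[abs_def])
  have g2: "gamma_inf a lp lm t B0 f (eta w2) = (a2 - m * I2) / I2"
    by (simp add: gamma_inf_def A2 I2_def Phi_def[abs_def] Psi_def[abs_def])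
  have I1p: "I1 > 0" unfolding I1_def by (rule PI_pos[OF Bm Bb lm_pos gP1(1)]) (rule Psi_pos[OF w1])
  have I2p: "I2 > 0" unfolding I2_def by (rule PI_pos[OF Bm Bb lm_pos gP2(1)]) (rule Psi_pos[OF w2])
  have ccp: "cc \<ge> 1" by (rule cc_ge1)
  have r1: "a1 \<le> cc * a2" unfolding a1_def a2_def
  proof (rule PI_le_scale[OF ga1 ga2])
    fix om :: "(real^'d) set" assume o: "finite om" "om \<subseteq> B0"
    have "Phi w1 om + m * Psi w1 om \<le> cc * Xs om" using bounds[OF w1 o] by blast
    also have "\<dots> \<le> cc * (Phi w2 om + m * Psi w2 om)" using bounds[OF w2 o] ccp by (intro mult_left_mono) auto
    finally show "Phi w1 om + m * Psi w1 om \<le> cc * (Phi w2 om + m * Psi w2 om)" .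
  qed
  have r2: "a2 \<le> cc * a1" unfolding a1_def a2_def
  proof (rule PI_le_scale[OF ga2 ga1])
    fix om :: "(real^'d) set" assume o: "finite om" "om \<subseteq> B0"
    have "Phi w2 om + m * Psi w2 om \<le> cc * Xs om" using bounds[OF w2 o] by blast
    also have "\<dots> \<le> cc * (Phi w1 om + m * Psi w1 om)" using bounds[OF w1 o] ccp by (intro mult_left_mono) auto
    finally show "Phi w2 om + m * Psi w2 om \<le> cc * (Phi w1 om + m * Psi w1 om)" .
  qed
  have r3: "I1 \<le> cc * I2" unfolding I1_def I2_def
  proof (rule PI_le_scale[OF gP1(1) gP2(1)])
    fix om :: "(real^'d) set" assume o: "finite om" "om \<subseteq> B0"
    have "Psi w1 om \<le> cc * Ys om" using bounds[OF w1 o] by blast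
    also have "\<dots> \<le> cc * Psi w2 om" using bounds[OF w2 o] ccp by (intro mult_left_mono) auto
    finally show "Psi w1 om \<le> cc * Psi w2 om" .
  qed
  have r4: "I2 \<le> cc * I1" unfolding I1_def I2_def
  proof (rule PI_le_scale[OF gP2(1) gP1(1)])
    fix om :: "(real^'d) set" assume o: "finite om" "om \<subseteq> B0"
    have "Psi w2 om \<le> cc * Ys om" using bounds[OF w2 o] by blast
    also have "\<dots> \<le> cc * Psi w1 om" using bounds[OF w1 o] ccp by (intro mult_left_mono) auto
    finally show "Psi w2 om \<le> cc * Psi w1 om" .
  qed
  have n1: "0 \<le> a1" unfolding a1_def
    by (rule PI_nonneg[OF ga1]) (use Phi_rng[OF w1] in blast)
  have n2: "0 \<le> a2" unfolding a2_def
    by (rule PI_nonneg[OF ga2]) (use Phi_rng[OF w2] in blast)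
  have u1: "a1 \<le> 2 * m * I1" unfolding a1_def I1_def
    by (rule PI_le_scale[OF ga1 gP1(1)]) (use Phi_rng[OF w1] in \<open>simp add: mult.assoc\<close>)
  have u2: "a2 \<le> 2 * m * I2" unfolding a2_def I2_def
    by (rule PI_le_scale[OF ga2 gP2(1)]) (use Phi_rng[OF w2] in \<open>simp add: mult.assoc\<close>)
  show ?thesis unfolding g1 g2 by (rule ratio_bound[OF I1p I2p ccp n1 n2 r1 r2 r3 r4 u1 u2])
qed

end


theorem proposition4p5:
  fixes a lp lm :: real and t :: ereal
  assumes "CARD('d::finite) \<ge> 2" and "a > 0" and "lp > lm" and "lm > 0"
    and "ereal (tG lp lm) < t"
  shows "gfun lp lm t (-1) > 0 \<and>
    (\<forall>r. 0 < r \<longrightarrow> (\<exists>A::real. \<forall>(x :: real^'d) L w f w1 w2.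
        L \<in> sets lebesgue \<longrightarrow> bounded L \<longrightarrow> ball x r \<subseteq> L \<longrightarrow>
        w \<in> ccfgs \<longrightarrow> w1 \<in> ccfgs \<longrightarrow> w2 \<in> ccfgs \<longrightarrow> f \<in> Fb (ball x r) \<longrightarrow>
        \<bar>gamma_inf a lp lm t (ball x r) f (cat (restr w (L - ball x r)) (restr w1 (- L)))
         - gamma_inf a lp lm t (ball x r) f (cat (restr w (L - ball x r)) (restr w2 (- L)))\<bar>
        \<le> A * supnorm f * exp (- gfun lp lm t (-1) * setdist (ball x r) (- L) / (2 * a))))"
proof -
  interpret S0: setup0 a lp lm t using assms by unfold_locales auto
  have gmeq: "S0.gm = gfun lp lm t (-1)" by (simp add: S0.gm_def)
  have part1: "gfun lp lm t (-1) > 0" using S0.gm_pos gmeq by simp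
  have part2: "\<exists>A::real. \<forall>(x :: real^'d) L w f w1 w2.
        L \<in> sets lebesgue \<longrightarrow> bounded L \<longrightarrow> ball x r \<subseteq> L \<longrightarrow>
        w \<in> ccfgs \<longrightarrow> w1 \<in> ccfgs \<longrightarrow> w2 \<in> ccfgs \<longrightarrow> f \<in> Fb (ball x r) \<longrightarrow>
        \<bar>gamma_inf a lp lm t (ball x r) f (cat (restr w (L - ball x r)) (restr w1 (- L)))
         - gamma_inf a lp lm t (ball x r) f (cat (restr w (L - ball x r)) (restr w2 (- L)))\<bar>
        \<le> A * supnorm f * exp (- gfun lp lm t (-1) * setdist (ball x r) (- L) / (2 * a))"
    if r: "0 < r" for r
  proof -
    define P where "P = geo.Pn TYPE('d) a r"
    define e3 where "e3 = exp (3 * S0.gm)"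
    define A where "A = 4 * real P * e3 * (1 + e3) ^ (2 * P)"
    show ?thesis
    proof (rule exI[of _ A], intro allI impI)
      fix x :: "real^'d" and L :: "(real^'d) set" and w w1 w2 :: "'d ccfg" and f :: "'d ccfg \<Rightarrow> real"
      assume Lm: "L \<in> sets lebesgue" and Lb: "bounded L" and BL: "ball x r \<subseteq> L"
        and w: "w \<in> ccfgs" and w1: "w1 \<in> ccfgs" and w2: "w2 \<in> ccfgs" and fF: "f \<in> Fb (ball x r)"
      interpret M: mainloc a lp lm t x r L w f
        using S0.setup0_axioms r Lm Lb BL w fF by (unfold_locales) auto
      interpret G: geo a lp lm t x r L w w "{}" using M.geoI[OF w] by (auto simp: M.B0_def)
      define ep where "ep = exp (- S0.gm * setdist (ball x r) (- L) / (2 * a))"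
      have ep1: "ep \<le> 1" using S0.gm_pos assms(2) by (simp add: ep_def)
      have ep0: "0 \<le> ep" by (simp add: ep_def)
      have kap: "G.kap = e3 * ep" by (simp add: G.kap_def G.dd_def G.B_def e3_def ep_def)
      have e30: "0 \<le> e3" by (simp add: e3_def)
      have k0: "0 \<le> G.kap" "G.kap \<le> e3" using kap ep1 ep0 e30 by (auto simp: mult_left_le)
      have diff: "\<bar>gamma_inf a lp lm t M.B0 f (M.eta w1) - gamma_inf a lp lm t M.B0 f (M.eta w2)\<bar> \<le> 2 * M.m * (M.cc ^ 2 - 1)"
        by (rule M.main_diff[OF w1 w2])
      have cc2: "M.cc ^ 2 = (1 + G.kap) ^ (2 * P)" by (simp add: M.cc_def P_def power_mult[symmetric] mult.commute)
      have "M.cc ^ 2 - 1 \<le> real (2 * P) * G.kap * (1 + G.kap) ^ (2 * P)" unfolding cc2 by (rule pow_bound[OF k0(1)])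
      also have "\<dots> \<le> real (2 * P) * (e3 * ep) * (1 + e3) ^ (2 * P)"
        using k0 kap by (intro mult_mono power_mono) auto
      finally have cb: "M.cc ^ 2 - 1 \<le> real (2 * P) * (e3 * ep) * (1 + e3) ^ (2 * P)" .
      have "2 * M.m * (M.cc ^ 2 - 1) \<le> 2 * M.m * (real (2 * P) * (e3 * ep) * (1 + e3) ^ (2 * P))"
        using cb M.m_nonneg by (intro mult_left_mono) auto
      also have "\<dots> = A * supnorm f * ep" by (simp add: A_def M.m_def algebra_simps)
      finally have fin: "2 * M.m * (M.cc ^ 2 - 1) \<le> A * supnorm f * ep" .
      have "M.B0 = ball x r" by (simp add: M.B0_def)
      moreover have "M.eta w' = cat (restr w (L - ball x r)) (restr w' (- L))" for w' by (simp add: M.eta_def M.B0_def)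
      ultimately show "\<bar>gamma_inf a lp lm t (ball x r) f (cat (restr w (L - ball x r)) (restr w1 (- L)))
         - gamma_inf a lp lm t (ball x r) f (cat (restr w (L - ball x r)) (restr w2 (- L)))\<bar>
        \<le> A * supnorm f * exp (- gfun lp lm t (-1) * setdist (ball x r) (- L) / (2 * a))"
        using diff fin by (simp add: ep_def gmeq)
    qed
  qed
  show ?thesis using part1 part2 by blast
qed


end
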